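(* Let $R$ be an integral domain, $1\le n\le d$, $X=\{x_1,\dots,x_n\}$, and let $Y=\{y_1,\dots,y_d\}$ be $d$ distinct indeterminates. Let $s_1(Y),\dots,s_d(Y)$ be the elementary symmetric polynomials in $Y$, so that $u=\prod_{i=1}^d(x-y_i)=x^d-s_1(Y)x^{d-1}+\cdots+(-1)^ds_d(Y)$. For $1\le i\le n$ let $$g_i(x_1,\dots,x_i)=h^{(i)}_{d-i+1}+\sum_{k=i-1}^{d-1}(-1)^{d-k}s_{d-k}(Y)\,h^{(i)}_{k-i+1}\in \mathbb{Z}[Y][X],$$ and let $G(s(Y))=\{g_1,\dots,g_n\}$. Then for every symmetric polynomial $h\in R[X]$, the normal form $r_{G(s(Y))}(h)$ of $h$ modulo $G(s(Y))$ with respect to the lexicographic order in $X$ with $x_1\prec\cdots\prec x_n$ lies in $R[Y][X]$, is symmetric in $X$ of degree $\le d-n$ in each variable of $X$, is symmetric in the elements of $Y$, and equals the generic symmetric Lagrange interpolant: $$r_Y(h)=r_{G(s(Y))}(h),\qquad\text{where}\quad r_Y(h)=\sum_{Y'\subset_n Y} h(Y')\,\frac{\prod_{x\in X,\,y'\in Y\setminus Y'}(x-y')}{\prod_{y\in Y',\,y'\in Y\setminus Y'}(y-y')}.$$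
   Context: $h^{(i)}_j=\sum_{k_1+\cdots+k_i=j}x_1^{k_1}\cdots x_i^{k_i}$ is the complete homogeneous symmetric polynomial of degree $j$ in $x_1,\dots,x_i$. Each $g_i$ is monic in $x_i$ with leading term $x_i^{d-i+1}$ for the lexicographic order on monomials in $X$, so division by $G(s(Y))$ requires no division by coefficients. $Y'\subset_n Y$ ranges over the $n$-element subsets of $Y$, and $h(Y')$ means substituting the elements of $Y'$ for $x_1,\dots,x_n$ in any order; $r_Y(h)$ a priori lies in $\operatorname{Frac}(R)(Y)[X]$. *)

theory Defs
  imports "HOL-Combinatorics.Permutations" "HOL-Library.Poly_Mapping" "HOL-Computational_Algebra.Fraction_Field"
begin

text \<open>Convention: x_i (1 <= i <= n) is variable number i-1, and
  y_j (1 <= j <= d) is variable number n+j-1.\<close>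

type_synonym 'a mpoly = "(nat \<Rightarrow>\<^sub>0 nat) \<Rightarrow>\<^sub>0 'a"

definition Var :: "nat \<Rightarrow> 'a::comm_ring_1 mpoly" where
  "Var v = Poly_Mapping.single (Poly_Mapping.single v 1) 1"

definition Const :: "'a::comm_ring_1 \<Rightarrow> 'a mpoly" where
  "Const c = Poly_Mapping.single 0 c"

definition monom :: "(nat \<Rightarrow>\<^sub>0 nat) \<Rightarrow> 'a::comm_ring_1 mpoly" where
  "monom m = Poly_Mapping.single m 1"

definition vars :: "'a::comm_ring_1 mpoly \<Rightarrow> nat set" where
  "vars p = (\<Union>m\<in>Poly_Mapping.keys p. Poly_Mapping.keys (m :: nat \<Rightarrow>\<^sub>0 nat))"

definition subst :: "(nat \<Rightarrow> 'a::comm_ring_1 mpoly) \<Rightarrow> 'a mpoly \<Rightarrow> 'a mpoly" where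
  "subst \<sigma> p = (\<Sum>m\<in>Poly_Mapping.keys p. Const (Poly_Mapping.lookup p m) * (\<Prod>v\<in>Poly_Mapping.keys m. \<sigma> v ^ Poly_Mapping.lookup m v))"

definition rename :: "(nat \<Rightarrow> nat) \<Rightarrow> 'a::comm_ring_1 mpoly \<Rightarrow> 'a mpoly" where
  "rename \<pi> p = subst (\<lambda>v. Var (\<pi> v)) p"

definition symmetric_in :: "nat set \<Rightarrow> 'a::comm_ring_1 mpoly \<Rightarrow> bool" where
  "symmetric_in V p \<longleftrightarrow> (\<forall>\<pi>. \<pi> permutes V \<longrightarrow> rename \<pi> p = p)"

abbreviation Xvars :: "nat \<Rightarrow> nat set" where "Xvars n \<equiv> {0..<n}"
abbreviation Yvars :: "nat \<Rightarrow> nat \<Rightarrow> nat set" where "Yvars n d \<equiv> {n..<n+d}"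

definition esym :: "nat set \<Rightarrow> nat \<Rightarrow> 'a::comm_ring_1 mpoly" where
  "esym V k = (\<Sum>S\<in>{S. S \<subseteq> V \<and> card S = k}. \<Prod>v\<in>S. Var v)"

text \<open>Complete homogeneous symmetric polynomial h^(i)_j in x_1..x_i,
  i.e. in the variables 0..<i.\<close>
definition hcomp :: "nat \<Rightarrow> nat \<Rightarrow> 'a::comm_ring_1 mpoly" where
  "hcomp i j = (\<Sum>m\<in>{m. Poly_Mapping.keys m \<subseteq> {0..<i} \<and> (\<Sum>v\<in>Poly_Mapping.keys m. Poly_Mapping.lookup m v) = j}. monom m)"

definition gpol :: "nat \<Rightarrow> nat \<Rightarrow> nat \<Rightarrow> 'a::comm_ring_1 mpoly" where
  "gpol n d i = hcomp i (d + 1 - i)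
     + (\<Sum>k\<in>{i-1..d-1}. (-1) ^ (d - k) * esym (Yvars n d) (d - k) * hcomp i (k + 1 - i))"

text \<open>r is reduced w.r.t. G(s(Y)): no monomial of r is divisible by the leading
  monomial x_i^(d-i+1) of g_i (lex order, x_1 < ... < x_n).\<close>
definition reduced_G :: "nat \<Rightarrow> nat \<Rightarrow> 'a::comm_ring_1 mpoly \<Rightarrow> bool" where
  "reduced_G n d r \<longleftrightarrow> (\<forall>m\<in>Poly_Mapping.keys r. \<forall>i\<in>{1..n}. Poly_Mapping.lookup m (i - 1) < d + 1 - i)"

definition normal_form_G :: "nat \<Rightarrow> nat \<Rightarrow> 'a::comm_ring_1 mpoly \<Rightarrow> 'a mpoly" where
  "normal_form_G n d h = (THE r. reduced_G n d r \<and>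
      (\<exists>c::nat \<Rightarrow> 'a mpoly. h - r = (\<Sum>i\<in>{1..n}. c i * gpol n d i)))"

abbreviation fr :: "'a::idom mpoly \<Rightarrow> 'a mpoly fract" where
  "fr p \<equiv> Fract p 1"

text \<open>h(Y'): substitute the elements of Y' (in increasing order) for x_1..x_n.\<close>
definition eval_at :: "nat \<Rightarrow> nat set \<Rightarrow> 'a::comm_ring_1 mpoly \<Rightarrow> 'a mpoly" where
  "eval_at n Y' h = subst (\<lambda>v. if v < n then Var (sorted_list_of_set Y' ! v) else Var v) h"

definition lagrange_rY :: "nat \<Rightarrow> nat \<Rightarrow> 'a::idom mpoly \<Rightarrow> 'a mpoly fract" where
  "lagrange_rY n d h = (\<Sum>Y'\<in>{Y'. Y' \<subseteq> Yvars n d \<and> card Y' = n}.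
      fr (eval_at n Y' h)
      * fr (\<Prod>x\<in>Xvars n. \<Prod>y'\<in>Yvars n d - Y'. Var x - Var y')
      / fr (\<Prod>y\<in>Y'. \<Prod>y'\<in>Yvars n d - Y'. Var y - Var y'))"

end

theory Submission
  imports Defs "HOL-Computational_Algebra.Polynomial"
begin

lemma pm_expand: "(p :: 'x \<Rightarrow>\<^sub>0 'b::comm_monoid_add) = (\<Sum>m\<in>Poly_Mapping.keys p. Poly_Mapping.single m (Poly_Mapping.lookup p m))"
proof (rule poly_mapping_eqI)
  fix k
  show "Poly_Mapping.lookup p k = Poly_Mapping.lookup (\<Sum>m\<in>Poly_Mapping.keys p. Poly_Mapping.single m (Poly_Mapping.lookup p m)) k"
    by (simp add: lookup_sum lookup_single when_def in_keys_iff)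
qed

lemma keys_sum_sub: "Poly_Mapping.keys (sum (f :: 'i \<Rightarrow> 'x \<Rightarrow>\<^sub>0 'b::comm_monoid_add) I) \<subseteq> (\<Union>i\<in>I. Poly_Mapping.keys (f i))"
proof (cases "finite I")
  case True then show ?thesis
    by (induction I rule: finite_induct) (use keys_add in fastforce)+
qed simp

definition mon :: "(nat \<Rightarrow> 'a::comm_ring_1 mpoly) \<Rightarrow> (nat \<Rightarrow>\<^sub>0 nat) \<Rightarrow> 'a mpoly" where
  "mon \<sigma> m = (\<Prod>v\<in>Poly_Mapping.keys m. \<sigma> v ^ Poly_Mapping.lookup m v)"

lemma mon_superset:
  assumes "finite S" "Poly_Mapping.keys m \<subseteq> S"
  shows "mon \<sigma> m = (\<Prod>v\<in>S. \<sigma> v ^ Poly_Mapping.lookup m v)"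
  unfolding mon_def
  by (rule prod.mono_neutral_left) (use assms in \<open>auto simp: in_keys_iff\<close>)

lemma keys_add_nat: "Poly_Mapping.keys (a + b :: 'x \<Rightarrow>\<^sub>0 nat) = Poly_Mapping.keys a \<union> Poly_Mapping.keys b"
  by (auto simp: in_keys_iff lookup_add)

lemma mon_add: "mon \<sigma> (a + b) = mon \<sigma> a * mon \<sigma> b"
proof -
  let ?S = "Poly_Mapping.keys a \<union> Poly_Mapping.keys b"
  have "mon \<sigma> (a + b) = (\<Prod>v\<in>?S. \<sigma> v ^ Poly_Mapping.lookup (a+b) v)"
    by (rule mon_superset) (auto simp: keys_add_nat)
  also have "\<dots> = (\<Prod>v\<in>?S. \<sigma> v ^ Poly_Mapping.lookup a v) * (\<Prod>v\<in>?S. \<sigma> v ^ Poly_Mapping.lookup b v)"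
    by (simp add: lookup_add power_add prod.distrib)
  also have "\<dots> = mon \<sigma> a * mon \<sigma> b"
    by (subst (1 2) mon_superset[symmetric]) auto
  finally show ?thesis .
qed

lemma mon_zero[simp]: "mon \<sigma> 0 = 1"
  by (simp add: mon_def)

lemma mon_single: "mon \<sigma> (Poly_Mapping.single v k) = \<sigma> v ^ k"
  by (cases "k = 0") (simp_all add: mon_def)

lemma Const_add: "Const (a + b) = Const a + Const b"
  by (simp add: Const_def single_add)
lemma Const_mult: "Const (a * b) = Const a * Const b"
  by (simp add: Const_def mult_single)
lemma Const_zero[simp]: "Const 0 = 0"
  by (simp add: Const_def)
lemma Const_one[simp]: "Const 1 = 1"
  by (simp add: Const_def)
lemma Const_uminus: "Const (- a) = - Const a"
  by (simp add: Const_def single_uminus)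

lemma subst_superset:
  assumes "finite S" "Poly_Mapping.keys p \<subseteq> S"
  shows "subst \<sigma> p = (\<Sum>m\<in>S. Const (Poly_Mapping.lookup p m) * mon \<sigma> m)"
  unfolding subst_def mon_def[symmetric]
  by (rule sum.mono_neutral_left) (use assms in \<open>auto simp: in_keys_iff\<close>)

lemma subst_add: "subst \<sigma> (p + q) = subst \<sigma> p + subst \<sigma> q"
proof -
  let ?S = "Poly_Mapping.keys p \<union> Poly_Mapping.keys q"
  have "subst \<sigma> (p + q) = (\<Sum>m\<in>?S. Const (Poly_Mapping.lookup (p+q) m) * mon \<sigma> m)"
    by (rule subst_superset) (use keys_add[of p q] in auto)
  also have "\<dots> = (\<Sum>m\<in>?S. Const (Poly_Mapping.lookup p m) * mon \<sigma> m) + (\<Sum>m\<in>?S. Const (Poly_Mapping.lookup q m) * mon \<sigma> m)"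
    by (simp add: lookup_add Const_add distrib_right sum.distrib)
  also have "\<dots> = subst \<sigma> p + subst \<sigma> q"
    by (subst (1 2) subst_superset[symmetric]) auto
  finally show ?thesis .
qed

lemma subst_zero[simp]: "subst \<sigma> 0 = 0"
  by (simp add: subst_def)

lemma subst_single: "subst \<sigma> (Poly_Mapping.single m c) = Const c * mon \<sigma> m"
  by (subst subst_superset[of "{m}"]) auto

lemma subst_sum: "subst \<sigma> (sum f I) = (\<Sum>i\<in>I. subst \<sigma> (f i))"
proof (cases "finite I")
  case True then show ?thesis by (induction I rule: finite_induct) (simp_all add: subst_add)
qed simp

lemma subst_mult: "subst \<sigma> (p * q) = subst \<sigma> p * subst \<sigma> q"
proof -
  have "p * q = (\<Sum>a\<in>Poly_Mapping.keys p. \<Sum>b\<in>Poly_Mapping.keys q.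
          Poly_Mapping.single a (Poly_Mapping.lookup p a) * Poly_Mapping.single b (Poly_Mapping.lookup q b))"
    by (subst (1) pm_expand[of p], subst (1) pm_expand[of q]) (simp add: sum_product)
  then have "subst \<sigma> (p * q) = (\<Sum>a\<in>Poly_Mapping.keys p. \<Sum>b\<in>Poly_Mapping.keys q.
       (Const (Poly_Mapping.lookup p a) * mon \<sigma> a) * (Const (Poly_Mapping.lookup q b) * mon \<sigma> b))"
    by (simp add: subst_sum mult_single subst_single mon_add Const_mult mult_ac)
  also have "\<dots> = subst \<sigma> p * subst \<sigma> q"
    by (simp add: subst_def mon_def sum_product)
  finally show ?thesis .
qed

lemma subst_one[simp]: "subst \<sigma> 1 = 1"
  using subst_single[of \<sigma> 0 1] by simp

lemma subst_Const[simp]: "subst \<sigma> (Const c) = Const c"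
  by (simp add: Const_def subst_single)

lemma subst_Var[simp]: "subst \<sigma> (Var v) = \<sigma> v"
  by (simp add: Var_def subst_single mon_single)

lemma subst_uminus: "subst \<sigma> (- p) = - subst \<sigma> p"
  using subst_add[of \<sigma> p "-p"] by (intro minus_unique[symmetric]) simp

lemma subst_diff: "subst \<sigma> (p - q) = subst \<sigma> p - subst \<sigma> q"
  using subst_add[of \<sigma> p "-q"] by (simp add: subst_uminus)

lemma subst_power: "subst \<sigma> (p ^ k) = subst \<sigma> p ^ k"
  by (induction k) (simp_all add: subst_mult)

lemma subst_prod: "subst \<sigma> (prod f I) = (\<Prod>i\<in>I. subst \<sigma> (f i))"
proof (cases "finite I")
  case True then show ?thesis by (induction I rule: finite_induct) (simp_all add: subst_mult)
qed simp

lemma subst_numeral[simp]: "subst \<sigma> (numeral k) = numeral k"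
  by (metis Const_def single_numeral subst_Const)

lemma subst_minus_one_power: "subst \<sigma> ((-1) ^ k) = (-1) ^ k"
  by (simp add: subst_power subst_uminus)

lemmas subst_simps = subst_add subst_mult subst_uminus subst_diff subst_power subst_prod subst_sum subst_single

lemma subst_subst: "subst \<sigma> (subst \<tau> p) = subst (\<lambda>v. subst \<sigma> (\<tau> v)) p"
proof -
  have "subst \<sigma> (subst \<tau> p) = (\<Sum>m\<in>Poly_Mapping.keys p. Const (Poly_Mapping.lookup p m) *
     (\<Prod>v\<in>Poly_Mapping.keys m. subst \<sigma> (\<tau> v) ^ Poly_Mapping.lookup m v))"
    by (simp add: subst_def[of \<tau> p] subst_sum subst_mult subst_prod subst_power)
  then show ?thesis by (simp add: subst_def[of "\<lambda>v. subst \<sigma> (\<tau> v)" p])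
qed

lemma Var_power: "Var v ^ k = Poly_Mapping.single (Poly_Mapping.single v k) 1"
  by (induction k) (simp_all add: Var_def mult_single single_add[symmetric] add.commute)

lemma mon_Var: "mon Var m = Poly_Mapping.single m 1"
proof -
  have "\<And>S. finite S \<Longrightarrow> (\<Prod>v\<in>S. Var v ^ Poly_Mapping.lookup m v :: 'a::comm_ring_1 mpoly) =
      Poly_Mapping.single (\<Sum>v\<in>S. Poly_Mapping.single v (Poly_Mapping.lookup m v)) 1"
  proof -
    fix S :: "nat set" assume "finite S"
    then show "?thesis S"
      by (induction S rule: finite_induct) (simp_all add: Var_power mult_single)
  qed
  then show ?thesis unfolding mon_def by (simp flip: pm_expand)
qed

lemma subst_Var_id[simp]: "subst Var p = p"
proof -
  have "subst Var p = (\<Sum>m\<in>Poly_Mapping.keys p. Poly_Mapping.single m (Poly_Mapping.lookup p m))"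
    unfolding subst_def mon_def[symmetric] mon_Var
    by (simp add: Const_def mult_single)
  then show ?thesis by (simp flip: pm_expand)
qed

lemma subst_cong:
  assumes "\<And>v. v \<in> vars p \<Longrightarrow> \<sigma> v = \<tau> v"
  shows "subst \<sigma> p = subst \<tau> p"
  unfolding subst_def
proof (intro sum.cong refl arg_cong2[where f="(*)"] prod.cong)
  fix m v assume "m \<in> Poly_Mapping.keys p" "v \<in> Poly_Mapping.keys m"
  then have "\<sigma> v = \<tau> v" by (intro assms) (auto simp: vars_def)
  then show "\<sigma> v ^ Poly_Mapping.lookup m v = \<tau> v ^ Poly_Mapping.lookup m v" by simp
qed

lemma subst_id_on_vars:
  assumes "\<And>v. v \<in> vars p \<Longrightarrow> \<sigma> v = Var v"
  shows "subst \<sigma> p = p"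
  using subst_cong[of p \<sigma> Var] assms by simp

lemma rename_def2: "rename \<pi> p = subst (\<lambda>v. Var (\<pi> v)) p"
  by (simp add: rename_def)

lemma subst_rename: "subst \<sigma> (rename \<pi> p) = subst (\<lambda>v. \<sigma> (\<pi> v)) p"
  by (simp add: rename_def subst_subst)

lemma rename_subst: "rename \<pi> (subst \<sigma> p) = subst (\<lambda>v. rename \<pi> (\<sigma> v)) p"
  by (simp add: rename_def subst_subst)

definition wt :: "(nat \<Rightarrow> nat) \<Rightarrow> (nat \<Rightarrow>\<^sub>0 nat) \<Rightarrow> nat" where
  "wt w m = (\<Sum>v\<in>Poly_Mapping.keys m. Poly_Mapping.lookup m v * w v)"

lemma wt_superset:
  assumes "finite S" "Poly_Mapping.keys m \<subseteq> S"
  shows "wt w m = (\<Sum>v\<in>S. Poly_Mapping.lookup m v * w v)"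
  unfolding wt_def
  by (rule sum.mono_neutral_left) (use assms in \<open>auto simp: in_keys_iff\<close>)

lemma wt_add: "wt w (a + b) = wt w a + wt w b"
proof -
  let ?S = "Poly_Mapping.keys a \<union> Poly_Mapping.keys b"
  have "wt w (a + b) = (\<Sum>v\<in>?S. Poly_Mapping.lookup (a+b) v * w v)"
    by (rule wt_superset) (auto simp: keys_add_nat)
  also have "\<dots> = (\<Sum>v\<in>?S. Poly_Mapping.lookup a v * w v) + (\<Sum>v\<in>?S. Poly_Mapping.lookup b v * w v)"
    by (simp add: lookup_add sum.distrib algebra_simps)
  also have "\<dots> = wt w a + wt w b"
    by (subst (1 2) wt_superset[symmetric]) auto
  finally show ?thesis .
qed

lemma wt_zero[simp]: "wt w 0 = 0"
  by (simp add: wt_def)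

lemma wt_single: "wt w (Poly_Mapping.single v k) = k * w v"
  by (cases "k = 0") (simp_all add: wt_def)

definition wle :: "(nat \<Rightarrow> nat) \<Rightarrow> nat \<Rightarrow> 'a::comm_ring_1 mpoly \<Rightarrow> bool" where
  "wle w N p \<longleftrightarrow> (\<forall>m\<in>Poly_Mapping.keys p. wt w m \<le> N)"

lemma wle_mono: "wle w N p \<Longrightarrow> N \<le> M \<Longrightarrow> wle w M p"
  by (auto simp: wle_def)

lemma wle_0[simp]: "wle w N 0"
  by (simp add: wle_def)

lemma wle_add: "wle w N p \<Longrightarrow> wle w N q \<Longrightarrow> wle w N (p + q)"
  using keys_add[of p q] by (auto simp: wle_def)

lemma wle_uminus: "wle w N p \<Longrightarrow> wle w N (- p)"
  by (simp add: wle_def)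

lemma wle_diff: "wle w N p \<Longrightarrow> wle w N q \<Longrightarrow> wle w N (p - q)"
  using keys_diff[of p q] by (auto simp: wle_def)

lemma wle_sum: "(\<And>i. i \<in> I \<Longrightarrow> wle w N (f i)) \<Longrightarrow> wle w N (sum f I)"
  using keys_sum_sub[of f I] by (force simp: wle_def)

lemma wle_mult: "wle w N p \<Longrightarrow> wle w M q \<Longrightarrow> wle w (N + M) (p * q)"
  using keys_mult[of p q] by (force simp: wle_def wt_add intro: add_mono)

lemma wle_one[simp]: "wle w 0 1"
  by (simp add: wle_def)

lemma wle_Const[simp]: "wle w 0 (Const c)"
  by (simp add: wle_def Const_def)

lemma wle_single: "wle w (wt w m) (Poly_Mapping.single m c)"
  by (simp add: wle_def)

lemma wle_Var: "wle w (w v) (Var v)"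
  using wle_single[of w "Poly_Mapping.single v 1" 1] by (simp add: Var_def wt_single)

lemma wle_power: "wle w N p \<Longrightarrow> wle w (k * N) (p ^ k)"
proof (induction k)
  case 0 then show ?case by simp
next
  case (Suc k)
  then have "wle w (N + k * N) (p * p ^ k)" by (intro wle_mult) auto
  then show ?case by simp
qed

lemma wle_prod: "(\<And>i. i \<in> I \<Longrightarrow> wle w (N i) (f i)) \<Longrightarrow> wle w (\<Sum>i\<in>I. N i) (prod f I)"
proof (induction I rule: infinite_finite_induct)
  case (insert x F)
  then have "wle w (N x + (\<Sum>i\<in>F. N i)) (f x * prod f F)" by (intro wle_mult) auto
  then show ?case using insert by simp
qed simp_all

lemma wle_subst:
  assumes "wle e N p" "\<And>v. v \<in> vars p \<Longrightarrow> wle w (e v) (\<sigma> v)"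
  shows "wle w N (subst \<sigma> p)"
  unfolding subst_def
proof (rule wle_sum)
  fix m assume m: "m \<in> Poly_Mapping.keys p"
  have "wle w (0 + (\<Sum>v\<in>Poly_Mapping.keys m. Poly_Mapping.lookup m v * e v))
     (Const (Poly_Mapping.lookup p m) * (\<Prod>v\<in>Poly_Mapping.keys m. \<sigma> v ^ Poly_Mapping.lookup m v))"
  proof (intro wle_mult wle_prod wle_power)
    fix v assume "v \<in> Poly_Mapping.keys m"
    then show "wle w (e v) (\<sigma> v)" using m by (intro assms(2)) (auto simp: vars_def)
  qed simp
  moreover have "(\<Sum>v\<in>Poly_Mapping.keys m. Poly_Mapping.lookup m v * e v) \<le> N"
    using assms(1) m by (auto simp: wle_def wt_def)
  ultimately show "wle w N (Const (Poly_Mapping.lookup p m) * (\<Prod>v\<in>Poly_Mapping.keys m. \<sigma> v ^ Poly_Mapping.lookup m v))"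
    by (auto elim: wle_mono)
qed

definition dv :: "nat \<Rightarrow> nat \<Rightarrow> nat" where "dv v = (\<lambda>u. if u = v then 1 else 0)"

lemma wt_dv: "wt (dv v) m = Poly_Mapping.lookup m v"
proof -
  have "wt (dv v) m = (\<Sum>u\<in>insert v (Poly_Mapping.keys m). Poly_Mapping.lookup m u * dv v u)"
    by (rule wt_superset) auto
  also have "\<dots> = Poly_Mapping.lookup m v"
    by (subst sum.remove[of _ v]) (auto simp: dv_def)
  finally show ?thesis .
qed

lemma wle_dv: "wle (dv v) N p \<longleftrightarrow> (\<forall>m\<in>Poly_Mapping.keys p. Poly_Mapping.lookup m v \<le> N)"
  by (simp add: wle_def wt_dv)

lemma not_in_vars_iff: "v \<notin> vars p \<longleftrightarrow> wle (dv v) 0 p"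
  by (auto simp: wle_dv vars_def in_keys_iff)

lemma vars_subset_iff: "vars p \<subseteq> W \<longleftrightarrow> (\<forall>v. v \<notin> W \<longrightarrow> wle (dv v) 0 p)"
  using not_in_vars_iff by blast

lemma wle_Var_dv: "wle (dv v) (if u = v then 1 else 0) (Var u)"
  using wle_Var[of "dv v" u] by (simp add: dv_def)

lemma wle_Var_dv0: "u \<noteq> v \<Longrightarrow> wle (dv v) 0 (Var u)"
  using wle_Var_dv[of v u] by simp

lemma split_deg:
  fixes D p :: "'a::idom mpoly"
  assumes "wle (dv v) 0 D" "D \<noteq> 0" "wle (dv v) N (D * p)"
  shows "wle (dv v) N p"
proof -
  define A where "A = {m\<in>Poly_Mapping.keys p. Poly_Mapping.lookup m v \<le> N}"
  define B where "B = {m\<in>Poly_Mapping.keys p. \<not> Poly_Mapping.lookup m v \<le> N}"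
  define plo where "plo = (\<Sum>m\<in>A. Poly_Mapping.single m (Poly_Mapping.lookup p m))"
  define phi where "phi = (\<Sum>m\<in>B. Poly_Mapping.single m (Poly_Mapping.lookup p m))"
  have "plo + phi = (\<Sum>m\<in>A \<union> B. Poly_Mapping.single m (Poly_Mapping.lookup p m))"
    unfolding plo_def phi_def by (rule sum.union_disjoint[symmetric]) (auto simp: A_def B_def)
  also have "A \<union> B = Poly_Mapping.keys p" by (auto simp: A_def B_def)
  finally have "p = plo + phi" using pm_expand[of p] by simp
  have klo: "Poly_Mapping.keys plo \<subseteq> A"
    using keys_sum_sub[of _ A] unfolding plo_def by (force split: if_splits)
  have khi: "Poly_Mapping.keys phi \<subseteq> B"
    using keys_sum_sub[of _ B] unfolding phi_def by (force split: if_splits)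
  have lo: "wle (dv v) N plo" using klo by (auto simp: wle_dv A_def)
  have "D * phi = D * p - D * plo" using \<open>p = plo + phi\<close> by (simp add: algebra_simps)
  moreover have "wle (dv v) N (D * p - D * plo)"
    using assms(3) wle_mult[OF assms(1) lo] by (intro wle_diff) auto
  ultimately have 1: "wle (dv v) N (D * phi)" by simp
  have "Poly_Mapping.keys (D * phi) = {}"
  proof safe
    fix m assume m: "m \<in> Poly_Mapping.keys (D * phi)"
    then obtain a b where ab: "m = a + b" "a \<in> Poly_Mapping.keys D" "b \<in> Poly_Mapping.keys phi"
      using keys_mult[of D phi] by blast
    have "Poly_Mapping.lookup a v = 0" using assms(1) ab(2) by (auto simp: wle_dv)
    moreover have "Poly_Mapping.lookup b v > N" using khi ab(3) by (auto simp: B_def)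
    moreover have "Poly_Mapping.lookup m v \<le> N" using 1 m by (auto simp: wle_dv)
    ultimately show "m \<in> {}" using ab(1) by (simp add: lookup_add)
  qed
  then have "phi = 0" using assms(2) by simp
  then show ?thesis using lo \<open>p = plo + phi\<close> by simp
qed

definition Mset :: "nat \<Rightarrow> nat \<Rightarrow> (nat \<Rightarrow>\<^sub>0 nat) set" where
  "Mset i j = {m. Poly_Mapping.keys m \<subseteq> {0..<i} \<and> (\<Sum>v\<in>Poly_Mapping.keys m. Poly_Mapping.lookup m v) = j}"

lemma hcomp_Mset: "hcomp i j = (\<Sum>m\<in>Mset i j. Defs.monom m)"
  by (simp add: hcomp_def Mset_def)

lemma sum_keys_sub:
  assumes "Poly_Mapping.keys (m::nat \<Rightarrow>\<^sub>0 nat) \<subseteq> {0..<i}"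
  shows "(\<Sum>v\<in>Poly_Mapping.keys m. Poly_Mapping.lookup m v) = (\<Sum>v\<in>{0..<i}. Poly_Mapping.lookup m v)"
  by (rule sum.mono_neutral_left) (use assms in \<open>auto simp: in_keys_iff\<close>)

lemma Mset_iff: "m \<in> Mset i j \<longleftrightarrow> Poly_Mapping.keys m \<subseteq> {0..<i} \<and> (\<Sum>v\<in>{0..<i}. Poly_Mapping.lookup m v) = j"
  unfolding Mset_def using sum_keys_sub[of m i] by auto

lemma Mset_0: "Mset 0 j = (if j = 0 then {0} else {})"
  by (auto simp: Mset_iff)

lemma Mset_Suc: "Mset (Suc i) j = (\<Union>l\<in>{..j}. (\<lambda>m. m + Poly_Mapping.single i l) ` Mset i (j - l))"
proof (intro equalityI subsetI)
  fix m assume m: "m \<in> Mset (Suc i) j"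
  define l where "l = Poly_Mapping.lookup m i"
  define m' where "m' = Poly_Mapping.update i 0 m"
  have m_eq: "m = m' + Poly_Mapping.single i l"
    by (rule poly_mapping_eqI) (simp add: m'_def l_def lookup_add lookup_update lookup_single when_def)
  have ks: "Poly_Mapping.keys m \<subseteq> {0..<Suc i}" and sm: "(\<Sum>v\<in>{0..<Suc i}. Poly_Mapping.lookup m v) = j"
    using m by (auto simp: Mset_iff)
  have km': "Poly_Mapping.keys m' \<subseteq> {0..<i}" using ks by (auto simp: m'_def keys_update)
  have "(\<Sum>v\<in>{0..<i}. Poly_Mapping.lookup m' v) = (\<Sum>v\<in>{0..<i}. Poly_Mapping.lookup m v)"
    by (rule sum.cong) (auto simp: m'_def lookup_update)
  then have "(\<Sum>v\<in>{0..<i}. Poly_Mapping.lookup m' v) = j - l" "l \<le> j" using sm by (auto simp: l_def)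
  then have "m' \<in> Mset i (j - l)" using km' by (simp add: Mset_iff)
  then show "m \<in> (\<Union>l\<in>{..j}. (\<lambda>m. m + Poly_Mapping.single i l) ` Mset i (j - l))"
    using m_eq \<open>l \<le> j\<close> by blast
next
  fix x assume "x \<in> (\<Union>l\<in>{..j}. (\<lambda>m. m + Poly_Mapping.single i l) ` Mset i (j - l))"
  then obtain l m where l: "l \<in> {..j}" and m: "m \<in> Mset i (j - l)" and x: "x = m + Poly_Mapping.single i l"
    by blast
  have k: "Poly_Mapping.keys m \<subseteq> {0..<i}" and s: "(\<Sum>v\<in>{0..<i}. Poly_Mapping.lookup m v) = j - l"
    using m by (auto simp: Mset_iff)
  have mi: "Poly_Mapping.lookup m i = 0" using k by (auto simp: in_keys_iff)
  have "Poly_Mapping.keys (m + Poly_Mapping.single i l) \<subseteq> {0..<Suc i}"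
    using k by (auto simp: keys_add_nat split: if_splits)
  moreover have "(\<Sum>v\<in>{0..<Suc i}. Poly_Mapping.lookup (m + Poly_Mapping.single i l) v) = j"
  proof -
    have "(\<Sum>v\<in>{0..<i}. Poly_Mapping.lookup (m + Poly_Mapping.single i l) v) = (\<Sum>v\<in>{0..<i}. Poly_Mapping.lookup m v)"
      by (rule sum.cong) (auto simp: lookup_add lookup_single)
    then show ?thesis using s l mi by (simp add: lookup_add)
  qed
  ultimately show "x \<in> Mset (Suc i) j" by (simp add: Mset_iff x)
qed

lemma finite_Mset: "finite (Mset i j)"
proof (induction i arbitrary: j)
  case 0 then show ?case by (simp add: Mset_0)
next
  case (Suc i) then show ?case by (simp add: Mset_Suc)
qed

fun Hs :: "(nat \<Rightarrow> 'b::comm_ring_1) \<Rightarrow> nat \<Rightarrow> nat \<Rightarrow> 'b" where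
  "Hs \<sigma> 0 j = (if j = 0 then 1 else 0)"
| "Hs \<sigma> (Suc i) j = (\<Sum>l\<le>j. Hs \<sigma> i (j - l) * \<sigma> i ^ l)"

declare Hs.simps(2)[simp del]

lemma subst_monom: "subst \<sigma> (Defs.monom m) = mon \<sigma> m"
  by (simp add: Defs.monom_def subst_single)

lemma sum_Mset_Suc:
  "(\<Sum>m\<in>Mset (Suc i) j. f m) = (\<Sum>l\<le>j. \<Sum>m\<in>Mset i (j - l). f (m + Poly_Mapping.single i l))"
proof -
  have "(\<Sum>m\<in>Mset (Suc i) j. f m) = (\<Sum>l\<le>j. \<Sum>m\<in>(\<lambda>m. m + Poly_Mapping.single i l) ` Mset i (j - l). f m)"
    unfolding Mset_Suc
  proof (rule sum.UNION_disjoint)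
    show "\<forall>l\<in>{..j}. \<forall>l'\<in>{..j}. l \<noteq> l' \<longrightarrow>
      (\<lambda>m. m + Poly_Mapping.single i l) ` Mset i (j - l) \<inter> (\<lambda>m. m + Poly_Mapping.single i l') ` Mset i (j - l') = {}"
    proof (intro ballI impI)
      fix l l' :: nat assume "l \<noteq> l'"
      { fix m m' assume "m \<in> Mset i (j - l)" "m' \<in> Mset i (j - l')" "m + Poly_Mapping.single i l = m' + Poly_Mapping.single i l'"
        then have "Poly_Mapping.lookup m i = 0" "Poly_Mapping.lookup m' i = 0"
            "Poly_Mapping.lookup (m + Poly_Mapping.single i l) i = Poly_Mapping.lookup (m' + Poly_Mapping.single i l') i"
          by (auto simp: Mset_iff in_keys_iff)
        then have False using \<open>l \<noteq> l'\<close> by (simp add: lookup_add) }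
      then show "(\<lambda>m. m + Poly_Mapping.single i l) ` Mset i (j - l) \<inter> (\<lambda>m. m + Poly_Mapping.single i l') ` Mset i (j - l') = {}"
        by blast
    qed
  qed (auto simp: finite_Mset)
  also have "\<dots> = (\<Sum>l\<le>j. \<Sum>m\<in>Mset i (j - l). f (m + Poly_Mapping.single i l))"
  proof (rule sum.cong[OF refl])
    fix l show "sum f ((\<lambda>m. m + Poly_Mapping.single i l) ` Mset i (j - l)) = (\<Sum>m\<in>Mset i (j - l). f (m + Poly_Mapping.single i l))"
      by (subst sum.reindex) (auto simp: inj_on_def)
  qed
  finally show ?thesis .
qed

lemma subst_hcomp: "subst \<sigma> (hcomp i j) = Hs \<sigma> i j"
proof (induction i arbitrary: j)
  case 0 then show ?case by (simp add: hcomp_Mset Mset_0 subst_sum subst_monom)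
next
  case (Suc i)
  have "subst \<sigma> (hcomp (Suc i) j) = (\<Sum>m\<in>Mset (Suc i) j. mon \<sigma> m)"
    by (simp add: hcomp_Mset subst_sum subst_monom)
  also have "\<dots> = (\<Sum>l\<le>j. \<Sum>m\<in>Mset i (j - l). mon \<sigma> m * \<sigma> i ^ l)"
    by (simp add: sum_Mset_Suc mon_add mon_single)
  also have "\<dots> = (\<Sum>l\<le>j. Hs \<sigma> i (j - l) * \<sigma> i ^ l)"
    by (simp add: Suc[symmetric] hcomp_Mset subst_sum subst_monom sum_distrib_right)
  finally show ?case by (simp add: Hs.simps(2))
qed

lemma Hs_cong: "(\<And>v. v < i \<Longrightarrow> \<sigma> v = \<tau> v) \<Longrightarrow> Hs \<sigma> i j = Hs \<tau> i j"
proof (induction i arbitrary: j)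
  case (Suc i)
  then show ?case by (auto simp: Hs.simps(2) intro!: sum.cong)
qed simp

lemma Hs_0[simp]: "Hs \<sigma> i 0 = 1"
  by (induction i) (simp_all add: Hs.simps(2))

lemma Hs_rec: "Hs \<sigma> (Suc i) (Suc k) = Hs \<sigma> i (Suc k) + \<sigma> i * Hs \<sigma> (Suc i) k"
proof -
  have "Hs \<sigma> (Suc i) (Suc k) = (\<Sum>l\<le>Suc k. Hs \<sigma> i (Suc k - l) * \<sigma> i ^ l)" by (simp add: Hs.simps(2))
  also have "\<dots> = (\<Sum>l\<le>k. Hs \<sigma> i (Suc k - Suc l) * \<sigma> i ^ Suc l) + Hs \<sigma> i (Suc k)"
    by (subst sum.atMost_Suc_shift) simp
  also have "\<dots> = Hs \<sigma> i (Suc k) + \<sigma> i * Hs \<sigma> (Suc i) k"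
    by (simp add: sum_distrib_left mult_ac Hs.simps(2))
  finally show ?thesis .
qed

lemma Hs_1: "Hs \<sigma> (Suc 0) j = \<sigma> 0 ^ j"
proof -
  have "Hs \<sigma> (Suc 0) j = (\<Sum>l\<le>j. Hs \<sigma> 0 (j - l) * \<sigma> 0 ^ l)" by (simp add: Hs.simps(2))
  also have "\<dots> = (\<Sum>l\<le>j. (if l = j then \<sigma> 0 ^ l else 0))"
    by (intro sum.cong refl) auto
  finally show ?thesis by simp
qed

lemma Hs_diff:
  "Hs (\<sigma>(i := a)) (Suc i) (Suc j) - Hs (\<sigma>(i := b)) (Suc i) (Suc j)
     = (a - b) * Hs (\<sigma>(i := a, Suc i := b)) (Suc (Suc i)) j"
proof (induction j)
  case 0
  have h1: "Hs (\<sigma>(i := a)) (Suc i) (Suc 0) = Hs \<sigma> i (Suc 0) + a"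
    using Hs_rec[of "\<sigma>(i := a)" i 0] Hs_cong[of i "\<sigma>(i:=a)" \<sigma>] by simp
  have h2: "Hs (\<sigma>(i := b)) (Suc i) (Suc 0) = Hs \<sigma> i (Suc 0) + b"
    using Hs_rec[of "\<sigma>(i := b)" i 0] Hs_cong[of i "\<sigma>(i:=b)" \<sigma>] by simp
  show ?case by (simp only: h1 h2 Hs_0) (simp add: algebra_simps)
next
  case (Suc j)
  define A where "A k = Hs (\<sigma>(i := a)) (Suc i) k" for k
  define B where "B k = Hs (\<sigma>(i := b)) (Suc i) k" for k
  define C where "C k = Hs (\<sigma>(i := a, Suc i := b)) (Suc (Suc i)) k" for k
  have hA: "Hs (\<sigma>(i := a)) i k = Hs \<sigma> i k" for k by (rule Hs_cong) simp
  have hB: "Hs (\<sigma>(i := b)) i k = Hs \<sigma> i k" for k by (rule Hs_cong) simp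
  have hC: "Hs (\<sigma>(i := a, Suc i := b)) (Suc i) k = A k" for k unfolding A_def by (rule Hs_cong) simp
  have A: "A (Suc (Suc j)) = Hs \<sigma> i (Suc (Suc j)) + a * A (Suc j)"
    unfolding A_def by (subst Hs_rec) (simp add: hA)
  have B: "B (Suc (Suc j)) = Hs \<sigma> i (Suc (Suc j)) + b * B (Suc j)"
    unfolding B_def by (subst Hs_rec) (simp add: hB)
  have C: "C (Suc j) = A (Suc j) + b * C j"
    unfolding C_def by (subst Hs_rec) (simp add: hC)
  have IH: "A (Suc j) - B (Suc j) = (a - b) * C j" using Suc.IH by (simp add: A_def B_def C_def fun_upd_def)
  have "A (Suc (Suc j)) - B (Suc (Suc j)) = (a - b) * C (Suc j)"
  proof -
    have Beq: "B (Suc j) = A (Suc j) - (a - b) * C j" using IH by (simp add: algebra_simps)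
    show ?thesis unfolding A B C Beq by (simp add: algebra_simps)
  qed
  then show ?case by (simp add: A_def B_def C_def fun_upd_def)
qed

definition Gs :: "nat \<Rightarrow> (nat \<Rightarrow> 'b::comm_ring_1) \<Rightarrow> (nat \<Rightarrow> 'b) \<Rightarrow> nat \<Rightarrow> 'b" where
  "Gs d c \<sigma> i = (\<Sum>k\<in>{i - 1..d}. c k * Hs \<sigma> i (k + 1 - i))"

lemma Gs_cong: "(\<And>v. v < i \<Longrightarrow> \<sigma> v = \<tau> v) \<Longrightarrow> Gs d c \<sigma> i = Gs d c \<tau> i"
  unfolding Gs_def by (intro sum.cong refl arg_cong2[where f="(*)"] Hs_cong) auto

lemma Gs_diff:
  assumes "Suc j \<le> d"
  shows "Gs d c (\<sigma>(j := a)) (Suc j) - Gs d c (\<sigma>(j := b)) (Suc j)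
     = (a - b) * Gs d c (\<sigma>(j := a, Suc j := b)) (Suc (Suc j))"
proof -
  have r: "{j..d} = insert j {Suc j..d}" using assms by auto
  have g: "Gs d c \<tau> (Suc j) = c j + (\<Sum>k\<in>{Suc j..d}. c k * Hs \<tau> (Suc j) (Suc (k - Suc j)))" for \<tau>
  proof -
    have "Gs d c \<tau> (Suc j) = c j + (\<Sum>k\<in>{Suc j..d}. c k * Hs \<tau> (Suc j) (k + 1 - Suc j))"
      unfolding Gs_def by (simp add: r)
    also have "(\<Sum>k\<in>{Suc j..d}. c k * Hs \<tau> (Suc j) (k + 1 - Suc j)) = (\<Sum>k\<in>{Suc j..d}. c k * Hs \<tau> (Suc j) (Suc (k - Suc j)))"
      by (intro sum.cong refl) (auto simp: Suc_diff_Suc)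
    finally show ?thesis .
  qed
  have "Gs d c (\<sigma>(j := a)) (Suc j) - Gs d c (\<sigma>(j := b)) (Suc j)
     = (\<Sum>k\<in>{Suc j..d}. c k * (Hs (\<sigma>(j := a)) (Suc j) (Suc (k - Suc j)) - Hs (\<sigma>(j := b)) (Suc j) (Suc (k - Suc j))))"
    unfolding g by (simp add: sum_subtractf[symmetric] right_diff_distrib)
  also have "\<dots> = (a - b) * Gs d c (\<sigma>(j := a, Suc j := b)) (Suc (Suc j))"
    unfolding Gs_def Hs_diff by (simp add: sum_distrib_left algebra_simps)
  finally show ?thesis .
qed

lemma esym_0: "finite V \<Longrightarrow> esym V 0 = 1"
proof -
  assume "finite V"
  then have "{S. S \<subseteq> V \<and> card S = 0} = {{}}" by auto (metis card_0_eq empty_iff finite_subset)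
  then show ?thesis by (simp add: esym_def)
qed

lemma u_expand:
  fixes t :: "'a::comm_ring_1 mpoly"
  assumes "finite V" "card V = d"
  shows "(\<Sum>k\<in>{0..d}. (-1) ^ (d - k) * esym V (d - k) * t ^ k) = (\<Prod>v\<in>V. t - Var v)"
proof -
  have "(\<Prod>v\<in>V. t - Var v) = (\<Prod>v\<in>V. - Var v + t)" by simp
  also have "\<dots> = (\<Sum>S\<in>Pow V. (\<Prod>v\<in>S. - Var v) * (\<Prod>v\<in>V - S. t))"
    by (rule prod_add) (rule assms)
  also have "\<dots> = (\<Sum>S\<in>Pow V. (-1) ^ card S * (\<Prod>v\<in>S. Var v) * t ^ (d - card S))"
    using assms by (intro sum.cong refl) (auto simp: prod_uminus card_Diff_subset finite_subset)
  also have "\<dots> = (\<Sum>s\<in>{0..d}. \<Sum>S\<in>{S \<in> Pow V. card S = s}. (-1) ^ card S * (\<Prod>v\<in>S. Var v) * t ^ (d - card S))"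
    by (rule sum.group[symmetric]) (use assms in \<open>auto intro: card_mono\<close>)
  also have "\<dots> = (\<Sum>s\<in>{0..d}. (-1) ^ s * esym V s * t ^ (d - s))"
  proof (intro sum.cong refl)
    fix s
    have "(\<Sum>S\<in>{S \<in> Pow V. card S = s}. (-1) ^ card S * (\<Prod>v\<in>S. Var v) * t ^ (d - card S))
        = (\<Sum>S\<in>{S. S \<subseteq> V \<and> card S = s}. (-1) ^ s * (\<Prod>v\<in>S. Var v) * t ^ (d - s))"
      by (intro sum.cong) auto
    then show "(\<Sum>S\<in>{S \<in> Pow V. card S = s}. (-1) ^ card S * (\<Prod>v\<in>S. Var v) * t ^ (d - card S)) =
         (-1) ^ s * esym V s * t ^ (d - s)"
      by (simp add: esym_def sum_distrib_left sum_distrib_right mult_ac)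
  qed
  also have "\<dots> = (\<Sum>k\<in>{0..d}. (-1) ^ (d - k) * esym V (d - k) * t ^ k)"
    by (subst sum.atLeastAtMost_rev) (intro sum.cong refl, simp)
  finally show ?thesis by simp
qed

lemma Var_diff_nz: "u \<noteq> v \<Longrightarrow> (Var u - Var v :: 'a::comm_ring_1 mpoly) \<noteq> 0"
proof
  assume "u \<noteq> v" "Var u - Var v = (0 :: 'a mpoly)"
  then have "Poly_Mapping.lookup (Var u - Var v :: 'a mpoly) (Poly_Mapping.single u 1) = 0" by simp
  moreover have "Poly_Mapping.single u (1::nat) \<noteq> Poly_Mapping.single v 1" using \<open>u \<noteq> v\<close>
    by (metis lookup_single_eq lookup_single_not_eq one_neq_zero)
  ultimately show False by (simp add: Var_def lookup_minus lookup_single)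
qed

definition cY :: "nat set \<Rightarrow> nat \<Rightarrow> nat \<Rightarrow> 'a::comm_ring_1 mpoly" where
  "cY V d k = (-1) ^ (d - k) * esym V (d - k)"

lemma Gs_vanish:
  fixes \<sigma> :: "nat \<Rightarrow> 'a::idom mpoly"
  assumes V: "finite V" "card V = d"
    and i: "1 \<le> i" "i \<le> d"
    and a: "inj_on a {0..<i}" "a ` {0..<i} \<subseteq> V" "\<And>v. v < i \<Longrightarrow> \<sigma> v = Var (a v)"
  shows "Gs d (cY V d) \<sigma> i = 0"
  using i a
proof (induction i arbitrary: \<sigma> a rule: nat_induct_at_least)
  case base
  have "Gs d (cY V d) \<sigma> 1 = (\<Sum>k\<in>{0..d}. (-1) ^ (d - k) * esym V (d - k) * \<sigma> 0 ^ k)"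
    unfolding Gs_def cY_def by (simp add: Hs_1)
  also have "\<dots> = (\<Prod>v\<in>V. \<sigma> 0 - Var v)" by (rule u_expand[OF V])
  also have "\<dots> = 0"
  proof -
    have "a 0 \<in> V" "\<sigma> 0 = Var (a 0)" using base by auto
    then show ?thesis using V(1) by (auto intro!: bexI[of _ "a 0"])
  qed
  finally show ?case .
next
  case (Suc i)
  obtain j where j: "i = Suc j" using Suc(1) by (cases i) auto
  note IH = Suc.IH[unfolded j]
  note prems = Suc.prems[unfolded j]
  have "Gs d (cY V d) (\<sigma>(j := \<sigma> j)) (Suc j) - Gs d (cY V d) (\<sigma>(j := \<sigma> (Suc j))) (Suc j)
     = (\<sigma> j - \<sigma> (Suc j)) * Gs d (cY V d) (\<sigma>(j := \<sigma> j, Suc j := \<sigma> (Suc j))) (Suc (Suc j))"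
    by (rule Gs_diff) (use prems in auto)
  moreover have "Gs d (cY V d) (\<sigma>(j := \<sigma> j)) (Suc j) = 0"
  proof (rule IH[where a=a])
    show "inj_on a {0..<Suc j}" using prems(2) by (rule inj_on_subset) auto
  qed (use prems in auto)
  moreover have "Gs d (cY V d) (\<sigma>(j := \<sigma> (Suc j))) (Suc j) = 0"
  proof (rule IH[of "a(j := a (Suc j))"])
    have inj: "\<And>x y. x < Suc (Suc j) \<Longrightarrow> y < Suc (Suc j) \<Longrightarrow> a x = a y \<Longrightarrow> x = y"
      using prems(2) by (auto simp: inj_on_def)
    show "inj_on (a(j := a (Suc j))) {0..<Suc j}"
    proof (rule inj_onI)
      fix x y assume "x \<in> {0..<Suc j}" "y \<in> {0..<Suc j}" "(a(j := a (Suc j))) x = (a(j := a (Suc j))) y"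
      then show "x = y" using inj[of x y] inj[of x "Suc j"] inj[of "Suc j" y] by (auto split: if_splits)
    qed
    show "(a(j := a (Suc j))) ` {0..<Suc j} \<subseteq> V" using prems(3) by auto
    show "\<And>v. v < Suc j \<Longrightarrow> (\<sigma>(j := \<sigma> (Suc j))) v = Var ((a(j := a (Suc j))) v)"
      using prems(4) by auto
  qed (use prems in auto)
  moreover have "\<sigma> j - \<sigma> (Suc j) \<noteq> 0"
  proof -
    have "a j \<noteq> a (Suc j)" using inj_onD[OF prems(2), of j "Suc j"] by auto
    then show ?thesis using Var_diff_nz[of "a j" "a (Suc j)"] prems(4)[of j] prems(4)[of "Suc j"] by auto
  qed
  ultimately show ?case using j by simp
qed

lemma vars_esym: "vars (esym V k :: 'a::comm_ring_1 mpoly) \<subseteq> V"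
proof -
  have "wle (dv v) 0 (esym V k :: 'a mpoly)" if "v \<notin> V" for v
    unfolding esym_def
  proof (intro wle_sum)
    fix S assume "S \<in> {S. S \<subseteq> V \<and> card S = k}"
    then have "wle (dv v) (\<Sum>u\<in>S. 0) (\<Prod>u\<in>S. Var u :: 'a mpoly)"
      using that by (intro wle_prod) (auto intro!: wle_Var_dv0)
    then show "wle (dv v) 0 (\<Prod>u\<in>S. Var u :: 'a mpoly)" by simp
  qed
  then show ?thesis by (auto simp: vars_subset_iff)
qed

definition evf :: "nat \<Rightarrow> (nat \<Rightarrow> nat) \<Rightarrow> nat \<Rightarrow> 'a::comm_ring_1 mpoly" where
  "evf k a v = (if v < k then Var (a v) else Var v)"

lemma subst_gpol:
  assumes "1 \<le> i" "i \<le> d" "\<And>v. v \<in> Yvars n d \<Longrightarrow> \<sigma> v = Var v"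
  shows "subst \<sigma> (gpol n d i) = Gs d (cY (Yvars n d) d) \<sigma> i"
proof -
  have e: "subst \<sigma> (esym (Yvars n d) k) = esym (Yvars n d) k" for k
    by (rule subst_id_on_vars) (use vars_esym assms(3) in blast)
  have r: "{i - 1..d} = insert d {i - 1..d - 1}" using assms by auto
  have "subst \<sigma> (gpol n d i) = Hs \<sigma> i (d + 1 - i) +
     (\<Sum>k\<in>{i - 1..d - 1}. (-1) ^ (d - k) * esym (Yvars n d) (d - k) * Hs \<sigma> i (k + 1 - i))"
    unfolding gpol_def by (simp add: subst_add subst_sum subst_mult subst_minus_one_power e subst_hcomp)
  also have "\<dots> = Gs d (cY (Yvars n d) d) \<sigma> i"
    unfolding Gs_def cY_def r using assms by (subst sum.insert) (auto simp: esym_0)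
  finally show ?thesis .
qed

lemma gpol_vanish:
  fixes a :: "nat \<Rightarrow> nat"
  assumes "1 \<le> i" "i \<le> n" "n \<le> d" "inj_on a {0..<n}" "a ` {0..<n} \<subseteq> Yvars n d"
  shows "subst (evf n a) (gpol n d i :: 'a::idom mpoly) = 0"
proof -
  have "subst (evf n a) (gpol n d i :: 'a mpoly) = Gs d (cY (Yvars n d) d) (evf n a) i"
    by (rule subst_gpol) (use assms in \<open>auto simp: evf_def\<close>)
  also have "\<dots> = 0"
  proof (rule Gs_vanish[where a=a])
    show "inj_on a {0..<i}" using assms(4) by (rule inj_on_subset) (use assms in auto)
  qed (use assms in \<open>auto simp: evf_def\<close>)
  finally show ?thesis .
qed

lemma ideal_vanish:
  fixes a :: "nat \<Rightarrow> nat"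
  assumes "n \<le> d" "inj_on a {0..<n}" "a ` {0..<n} \<subseteq> Yvars n d"
  shows "subst (evf n a) (\<Sum>i\<in>{1..n}. c i * gpol n d i :: 'a::idom mpoly) = 0"
proof -
  have "\<And>i. i \<in> {1..n} \<Longrightarrow> subst (evf n a) (gpol n d i :: 'a mpoly) = 0"
    using gpol_vanish[OF _ _ assms] by auto
  then show ?thesis by (auto simp: subst_sum subst_mult intro!: sum.neutral)
qed

subsection \<open>Univariate view\<close>

definition clr :: "nat \<Rightarrow> (nat \<Rightarrow>\<^sub>0 nat) \<Rightarrow> (nat \<Rightarrow>\<^sub>0 nat)" where
  "clr k m = Poly_Mapping.update k 0 m"

lemma clr_split: "m = clr k m + Poly_Mapping.single k (Poly_Mapping.lookup m k)"
  by (rule poly_mapping_eqI) (simp add: clr_def lookup_add lookup_update lookup_single when_def)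

lemma keys_clr: "Poly_Mapping.keys (clr k m) = Poly_Mapping.keys m - {k}"
  by (simp add: clr_def keys_update)

lemma mon_cong: "(\<And>v. v \<in> Poly_Mapping.keys m \<Longrightarrow> \<sigma> v = \<tau> v) \<Longrightarrow> mon \<sigma> m = mon \<tau> m"
  unfolding mon_def by (rule prod.cong) auto

definition phi :: "nat \<Rightarrow> 'a::comm_ring_1 mpoly \<Rightarrow> 'a mpoly poly" where
  "phi k p = (\<Sum>m\<in>Poly_Mapping.keys p. Polynomial.monom (Poly_Mapping.single (clr k m) (Poly_Mapping.lookup p m)) (Poly_Mapping.lookup m k))"

lemma Const_mon_upd:
  assumes "\<sigma> k = t" "\<And>v. v \<noteq> k \<Longrightarrow> \<sigma> v = Var v"
  shows "Const c * mon \<sigma> m = Poly_Mapping.single (clr k m) c * t ^ Poly_Mapping.lookup m k"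
proof -
  have "mon \<sigma> m = mon \<sigma> (clr k m) * t ^ Poly_Mapping.lookup m k"
    by (subst clr_split[of m k]) (simp add: mon_add mon_single assms(1))
  also have "mon \<sigma> (clr k m) = mon Var (clr k m)"
    by (rule mon_cong) (auto simp: keys_clr assms(2))
  finally have "mon \<sigma> m = Poly_Mapping.single (clr k m) 1 * t ^ Poly_Mapping.lookup m k"
    by (simp add: mon_Var)
  then show ?thesis by (simp add: Const_def mult_single mult.assoc[symmetric])
qed

lemma poly_phi: "poly (phi k p) t = subst (Var(k := t)) p"
proof -
  have e: "Const c * mon (Var(k := t)) m = Poly_Mapping.single (clr k m) c * t ^ Poly_Mapping.lookup m k" for c m
    by (rule Const_mon_upd) auto
  have "subst (Var(k:=t)) p = (\<Sum>m\<in>Poly_Mapping.keys p. Const (Poly_Mapping.lookup p m) * mon (Var(k := t)) m)"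
    unfolding subst_def mon_def by (rule refl)
  also have "\<dots> = (\<Sum>m\<in>Poly_Mapping.keys p. Poly_Mapping.single (clr k m) (Poly_Mapping.lookup p m) * t ^ Poly_Mapping.lookup m k)"
    unfolding e by (rule refl)
  also have "\<dots> = poly (phi k p) t"
    unfolding phi_def poly_sum poly_monom by (rule refl)
  finally show ?thesis by simp
qed

lemma degree_phi: "wle (dv k) N p \<Longrightarrow> degree (phi k p) \<le> N"
  unfolding phi_def
  by (intro degree_sum_le) (auto simp: wle_dv intro: order.trans[OF degree_monom_le])

lemma phi_eq_0: "phi k p = 0 \<Longrightarrow> p = 0"
proof (rule ccontr)
  assume p: "phi k p = 0" "p \<noteq> 0"
  then obtain m0 where m0: "m0 \<in> Poly_Mapping.keys p" by (metis ex_in_conv keys_eq_empty)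
  have "Poly_Mapping.lookup (coeff (phi k p) (Poly_Mapping.lookup m0 k)) (clr k m0) =
     (\<Sum>m\<in>Poly_Mapping.keys p. if m = m0 then Poly_Mapping.lookup p m else 0)"
    unfolding phi_def coeff_sum lookup_sum
  proof (intro sum.cong refl)
    fix m assume "m \<in> Poly_Mapping.keys p"
    have "Poly_Mapping.lookup m k = Poly_Mapping.lookup m0 k \<and> clr k m = clr k m0 \<longleftrightarrow> m = m0"
      using clr_split[of m k] clr_split[of m0 k] by metis
    then show "Poly_Mapping.lookup (coeff (Polynomial.monom (Poly_Mapping.single (clr k m) (Poly_Mapping.lookup p m)) (Poly_Mapping.lookup m k))
            (Poly_Mapping.lookup m0 k)) (clr k m0) = (if m = m0 then Poly_Mapping.lookup p m else 0)"
      by (auto simp: coeff_monom lookup_single when_def)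
  qed
  also have "\<dots> = Poly_Mapping.lookup p m0" using m0 by simp
  finally show False using p m0 by (simp add: in_keys_iff)
qed

lemma Var_inj: "Var u = (Var v :: 'a::comm_ring_1 mpoly) \<Longrightarrow> u = v"
  using Var_diff_nz[of u v] by auto

lemma univ_zero:
  fixes p :: "'a::idom mpoly"
  assumes "wle (dv k) N p" "finite S" "N < card S" "\<And>y. y \<in> S \<Longrightarrow> subst (Var(k := Var y)) p = 0"
  shows "p = 0"
proof (rule ccontr)
  assume "p \<noteq> 0"
  then have nz: "phi k p \<noteq> 0" using phi_eq_0 by blast
  have "Var ` S \<subseteq> {x. poly (phi k p) x = 0}" using assms(4) by (auto simp: poly_phi)
  then have "card (Var ` S :: 'a mpoly set) \<le> card {x. poly (phi k p) x = 0}"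
    by (intro card_mono poly_roots_finite nz)
  also have "\<dots> \<le> degree (phi k p)" by (rule card_poly_roots_bound[OF nz])
  also have "\<dots> \<le> N" by (rule degree_phi[OF assms(1)])
  finally have "card (Var ` S :: 'a mpoly set) \<le> N" .
  moreover have "card (Var ` S :: 'a mpoly set) = card S"
    by (rule card_image) (auto simp: inj_on_def dest: Var_inj)
  ultimately show False using assms(3) by simp
qed

lemma zero_lemma:
  fixes q :: "'a::idom mpoly"
  assumes nd: "n \<le> d"
    and deg: "\<And>v. v < n \<Longrightarrow> wle (dv v) (d - v - 1) q"
    and van: "\<And>a. inj_on a {0..<n} \<Longrightarrow> a ` {0..<n} \<subseteq> Yvars n d \<Longrightarrow> subst (evf n a) q = 0"
  shows "q = 0"
proof -
  have P: "\<forall>a. inj_on a {0..<n - j} \<and> a ` {0..<n - j} \<subseteq> Yvars n d \<longrightarrow> subst (evf (n - j) a) q = 0"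
    if "j \<le> n" for j
    using that
  proof (induction j)
    case 0 then show ?case using van by simp
  next
    case (Suc j)
    define k where "k = n - Suc j"
    have kj: "n - j = Suc k" "k < n" using Suc.prems by (auto simp: k_def)
    have IH: "\<And>a. inj_on a {0..<Suc k} \<Longrightarrow> a ` {0..<Suc k} \<subseteq> Yvars n d \<Longrightarrow> subst (evf (Suc k) a) q = 0"
      using Suc.IH Suc.prems kj by auto
    show ?case unfolding k_def[symmetric]
    proof (intro allI impI, elim conjE)
      fix a assume inj: "inj_on a {0..<k}" and img: "a ` {0..<k} \<subseteq> Yvars n d"
      define p where "p = subst (evf k a) q"
      have "wle (dv k) (d - k - 1) p"
        unfolding p_def
      proof (rule wle_subst[where e="dv k"])
        show "wle (dv k) (d - k - 1) q" using deg kj by auto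
        fix w assume "w \<in> vars q"
        show "wle (dv k) (dv k w) (evf k a w)"
        proof (cases "w < k")
          case True
          then have "a w \<in> a ` {0..<k}" by auto
          then have "a w \<in> Yvars n d" using img by blast
          then have "a w \<noteq> k" using kj by auto
          then show ?thesis using True wle_Var_dv0[of "a w" k] by (simp add: evf_def dv_def)
        next
          case False
          then show ?thesis using wle_Var_dv[of k w] by (simp add: evf_def dv_def)
        qed
      qed
      moreover have "finite (Yvars n d - a ` {0..<k})" by simp
      moreover have "d - k - 1 < card (Yvars n d - a ` {0..<k})"
      proof -
        have "card (Yvars n d - a ` {0..<k}) = d - k"
          using img inj by (simp add: card_Diff_subset card_image)
        then show ?thesis using kj nd by simp
      qed
      moreover have "subst (Var(k := Var y)) p = 0" if y: "y \<in> Yvars n d - a ` {0..<k}" for y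
      proof -
        have "subst (Var(k := Var y)) p = subst (evf (Suc k) (a(k := y))) q"
          unfolding p_def subst_subst
        proof (rule subst_cong)
          fix v
          show "subst (Var(k := Var y)) (evf k a v) = evf (Suc k) (a(k := y)) v"
          proof (cases "v < k")
            case True
            then have "a v \<in> a ` {0..<k}" by auto
            then have "a v \<in> Yvars n d" using img by blast
            then have "a v \<noteq> k" using kj by auto
            then show ?thesis using True by (simp add: evf_def)
          qed (auto simp: evf_def)
        qed
        also have "\<dots> = 0"
        proof (rule IH)
          have e: "{0..<Suc k} = insert k {0..<k}" by auto
          have "inj_on (a(k := y)) {0..<k}" using inj by (rule inj_on_cong[THEN iffD1, rotated]) auto
          moreover have "(a(k := y)) ` {0..<k} = a ` {0..<k}" by auto
          ultimately show "inj_on (a(k := y)) {0..<Suc k}"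
            unfolding e using y by (simp add: inj_on_insert)
          show "(a(k := y)) ` {0..<Suc k} \<subseteq> Yvars n d" using img y by auto
        qed
        finally show ?thesis .
      qed
      ultimately show "subst (evf k a) q = 0" unfolding p_def[symmetric] by (rule univ_zero)
    qed
  qed
  have "subst (evf 0 id) q = 0" using P[of n] by simp
  moreover have "evf 0 id = (Var :: nat \<Rightarrow> 'a mpoly)" by (auto simp: evf_def)
  ultimately show ?thesis by simp
qed

definition inI :: "nat \<Rightarrow> nat \<Rightarrow> 'a::comm_ring_1 mpoly \<Rightarrow> bool" where
  "inI n d q \<longleftrightarrow> (\<exists>c. q = (\<Sum>i\<in>{1..n}. c i * gpol n d i))"

lemma inI_0[simp]: "inI n d 0"
  unfolding inI_def by (rule exI[of _ "\<lambda>_. 0"]) simp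

lemma inI_add: "inI n d p \<Longrightarrow> inI n d q \<Longrightarrow> inI n d (p + q)"
proof -
  assume "inI n d p" "inI n d q"
  then obtain c1 c2 where "p = (\<Sum>i\<in>{1..n}. c1 i * gpol n d i)" "q = (\<Sum>i\<in>{1..n}. c2 i * gpol n d i)"
    by (auto simp: inI_def)
  then have "p + q = (\<Sum>i\<in>{1..n}. (c1 i + c2 i) * gpol n d i)" by (simp add: sum.distrib distrib_right)
  then show ?thesis unfolding inI_def by (rule exI[of _ "\<lambda>i. c1 i + c2 i"])
qed

lemma inI_mult: "inI n d q \<Longrightarrow> inI n d (p * q)"
proof -
  assume "inI n d q"
  then obtain c where "q = (\<Sum>i\<in>{1..n}. c i * gpol n d i)" by (auto simp: inI_def)
  then have "p * q = (\<Sum>i\<in>{1..n}. (p * c i) * gpol n d i)" by (simp add: sum_distrib_left mult.assoc)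
  then show ?thesis unfolding inI_def by (rule exI[of _ "\<lambda>i. p * c i"])
qed

lemma inI_uminus: "inI n d q \<Longrightarrow> inI n d (- q)"
  using inI_mult[of n d q "-1"] by simp

lemma inI_diff: "inI n d p \<Longrightarrow> inI n d q \<Longrightarrow> inI n d (p - q)"
  using inI_add[of n d p "-q"] inI_uminus[of n d q] by simp

lemma inI_sum: "(\<And>x. x \<in> A \<Longrightarrow> inI n d (f x)) \<Longrightarrow> inI n d (sum f A)"
proof (induction A rule: infinite_finite_induct)
  case (insert x F) then show ?case by (simp add: inI_add)
qed simp_all

lemma inI_gpol: "i \<in> {1..n} \<Longrightarrow> inI n d (p * gpol n d i)"
  unfolding inI_def
proof (rule exI[of _ "\<lambda>j. if j = i then p else 0"])
  assume "i \<in> {1..n}"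
  have "(\<Sum>j\<in>{1..n}. (if j = i then p else 0) * gpol n d j) = (\<Sum>j\<in>{1..n}. if j = i then p * gpol n d j else 0)"
    by (intro sum.cong) auto
  then show "p * gpol n d i = (\<Sum>j\<in>{1..n}. (if j = i then p else 0) * gpol n d j)"
    using \<open>i \<in> {1..n}\<close> by simp
qed

lemma reduced_0[simp]: "reduced_G n d 0"
  by (simp add: reduced_G_def)

lemma reduced_add: "reduced_G n d p \<Longrightarrow> reduced_G n d q \<Longrightarrow> reduced_G n d (p + q)"
  using keys_add[of p q] by (auto simp: reduced_G_def)

lemma reduced_uminus: "reduced_G n d p \<Longrightarrow> reduced_G n d (- p)"
  by (simp add: reduced_G_def)

lemma reduced_Const_mult: "reduced_G n d p \<Longrightarrow> reduced_G n d (Const c * p)"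
  using keys_mult[of "Const c" p] by (auto simp: reduced_G_def Const_def split: if_splits)

lemma reduced_sum: "(\<And>x. x \<in> A \<Longrightarrow> reduced_G n d (f x)) \<Longrightarrow> reduced_G n d (sum f A)"
proof (induction A rule: infinite_finite_induct)
  case (insert x F) then show ?case by (simp add: reduced_add)
qed simp_all

definition wW :: "nat \<Rightarrow> nat \<Rightarrow> nat \<Rightarrow> nat" where
  "wW n d v = (if v < n then Suc d ^ v else 0)"

definition topm :: "nat \<Rightarrow> nat \<Rightarrow> (nat \<Rightarrow>\<^sub>0 nat)" where
  "topm d i = Poly_Mapping.single (i - 1) (d + 1 - i)"

lemma wt_Mset:
  assumes "m \<in> Mset i j" "i \<le> n"
  shows "wt (wW n d) m = (\<Sum>v\<in>{0..<i}. Poly_Mapping.lookup m v * Suc d ^ v)"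
proof -
  have "wt (wW n d) m = (\<Sum>v\<in>{0..<i}. Poly_Mapping.lookup m v * wW n d v)"
    by (rule wt_superset) (use assms in \<open>auto simp: Mset_iff\<close>)
  also have "\<dots> = (\<Sum>v\<in>{0..<i}. Poly_Mapping.lookup m v * Suc d ^ v)"
    using assms by (intro sum.cong) (auto simp: wW_def)
  finally show ?thesis .
qed

lemma wt_Mset_le:
  assumes "m \<in> Mset i j" "i \<le> n"
  shows "wt (wW n d) m \<le> j * Suc d ^ (i - 1)"
proof -
  have "wt (wW n d) m = (\<Sum>v\<in>{0..<i}. Poly_Mapping.lookup m v * Suc d ^ v)"
    by (rule wt_Mset[OF assms])
  also have "\<dots> \<le> (\<Sum>v\<in>{0..<i}. Poly_Mapping.lookup m v * Suc d ^ (i - 1))"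
    by (intro sum_mono mult_le_mono2 power_increasing) auto
  also have "\<dots> = j * Suc d ^ (i - 1)"
    using assms(1) by (simp add: Mset_iff sum_distrib_right[symmetric])
  finally show ?thesis .
qed

lemma wt_Mset_lt:
  assumes "m \<in> Mset i j" "i \<le> n" "1 \<le> i" "m \<noteq> Poly_Mapping.single (i - 1) j" "n \<le> d"
  shows "wt (wW n d) m < j * Suc d ^ (i - 1)"
proof -
  obtain k where k: "i = Suc k" using assms(3) by (cases i) auto
  have ks: "Poly_Mapping.keys m \<subseteq> {0..<Suc k}" and sj: "(\<Sum>v\<in>{0..<Suc k}. Poly_Mapping.lookup m v) = j"
    using assms(1) k by (auto simp: Mset_iff)
  define s where "s = (\<Sum>v\<in>{0..<k}. Poly_Mapping.lookup m v)"
  have sj': "s + Poly_Mapping.lookup m k = j" using sj by (simp add: s_def)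
  have "s \<noteq> 0"
  proof
    assume "s = 0"
    then have "\<forall>v\<in>{0..<k}. Poly_Mapping.lookup m v = 0" by (simp add: s_def)
    have "m = Poly_Mapping.single k j"
    proof (rule poly_mapping_eqI)
      fix v
      show "Poly_Mapping.lookup m v = Poly_Mapping.lookup (Poly_Mapping.single k j) v"
      proof (cases "v < k")
        case True then show ?thesis using \<open>\<forall>v\<in>{0..<k}. Poly_Mapping.lookup m v = 0\<close> by (simp add: lookup_single)
      next
        case False
        show ?thesis
        proof (cases "v = k")
          case True then show ?thesis using sj' \<open>s = 0\<close> by simp
        next
          case False
          with \<open>\<not> v < k\<close> have "v \<notin> Poly_Mapping.keys m" using ks by auto
          then show ?thesis using False by (simp add: lookup_single in_keys_iff)
        qed
      qed
    qed
    then show False using assms(4) k by simp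
  qed
  then have "k \<noteq> 0" by (auto simp: s_def)
  have "wt (wW n d) m = (\<Sum>v\<in>{0..<k}. Poly_Mapping.lookup m v * Suc d ^ v) + Poly_Mapping.lookup m k * Suc d ^ k"
    using wt_Mset[OF assms(1,2)] k by simp
  also have "(\<Sum>v\<in>{0..<k}. Poly_Mapping.lookup m v * Suc d ^ v) \<le> (\<Sum>v\<in>{0..<k}. Poly_Mapping.lookup m v * Suc d ^ (k - 1))"
    by (intro sum_mono mult_le_mono2 power_increasing) auto
  also have "\<dots> = s * Suc d ^ (k - 1)" by (simp add: s_def sum_distrib_right)
  also have "s * Suc d ^ (k - 1) < s * Suc d ^ k"
  proof -
    have "Suc d ^ (k - 1) < Suc d ^ k"
      using \<open>k \<noteq> 0\<close> assms(2,5) by (intro power_strict_increasing) (auto simp: k)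
    then show ?thesis using \<open>s \<noteq> 0\<close> by simp
  qed
  finally have "wt (wW n d) m < s * Suc d ^ k + Poly_Mapping.lookup m k * Suc d ^ k" by simp
  also have "\<dots> = j * Suc d ^ (i - 1)" using sj' k by (simp flip: add_mult_distrib)
  finally show ?thesis .
qed

lemma wle_esym_wW: "wle (wW n d) 0 (esym (Yvars n d) k :: 'a::comm_ring_1 mpoly)"
  unfolding esym_def
proof (intro wle_sum)
  fix S assume "S \<in> {S. S \<subseteq> Yvars n d \<and> card S = k}"
  then have "wle (wW n d) (\<Sum>u\<in>S. 0) (\<Prod>u\<in>S. Var u :: 'a mpoly)"
  proof (intro wle_prod)
    fix u assume "S \<in> {S. S \<subseteq> Yvars n d \<and> card S = k}" "u \<in> S"
    then have "\<not> u < n" by auto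
    then show "wle (wW n d) 0 (Var u :: 'a mpoly)" using wle_Var[of "wW n d" u] by (simp add: wW_def)
  qed
  then show "wle (wW n d) 0 (\<Prod>u\<in>S. Var u :: 'a mpoly)" by simp
qed

lemma wle_minus_one_pow: "wle w 0 ((-1) ^ k :: 'a::comm_ring_1 mpoly)"
  using wle_power[OF wle_uminus[OF wle_one], of w k] by simp

lemma wle_hcomp:
  assumes "i \<le> n"
  shows "wle (wW n d) (j * Suc d ^ (i - 1)) (hcomp i j :: 'a::comm_ring_1 mpoly)"
  unfolding hcomp_Mset Defs.monom_def
  by (intro wle_sum wle_mono[OF wle_single] wt_Mset_le assms)

lemma wt_topm:
  assumes "1 \<le> i" "i \<le> n"
  shows "wt (wW n d) (topm d i) = (d + 1 - i) * Suc d ^ (i - 1)"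
proof -
  have "i - 1 < n" using assms by arith
  then show ?thesis by (simp add: topm_def wt_single wW_def)
qed

lemma gpol_decomp:
  assumes "1 \<le> i" "i \<le> n" "n \<le> d"
  shows "\<exists>R. gpol n d i = Poly_Mapping.single (topm d i) 1 + R \<and>
      wle (wW n d) (wt (wW n d) (topm d i) - 1) (R :: 'a::comm_ring_1 mpoly)"
proof -
  define T where "T = d + 1 - i"
  define B where "B = Suc d ^ (i - 1)"
  have B1: "1 \<le> B" by (simp add: B_def)
  have T1: "1 \<le> T" using assms by (simp add: T_def)
  have wtop: "wt (wW n d) (topm d i) = T * B" using wt_topm[OF assms(1,2)] by (simp add: T_def B_def)
  have top_in: "topm d i \<in> Mset i T"
    using assms T1 by (auto simp: Mset_iff topm_def T_def lookup_single when_def)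
  define R where "R = (\<Sum>m\<in>Mset i T - {topm d i}. Defs.monom m)
     + (\<Sum>k\<in>{i - 1..d - 1}. (-1) ^ (d - k) * esym (Yvars n d) (d - k) * hcomp i (k + 1 - i) :: 'a mpoly)"
  have "hcomp i T = Defs.monom (topm d i) + (\<Sum>m\<in>Mset i T - {topm d i}. (Defs.monom m :: 'a mpoly))"
    unfolding hcomp_Mset by (rule sum.remove[OF finite_Mset top_in])
  then have "gpol n d i = Poly_Mapping.single (topm d i) 1 + R"
    unfolding gpol_def R_def T_def[symmetric] by (simp add: Defs.monom_def add.assoc)
  moreover have "wle (wW n d) (T * B - 1) R"
    unfolding R_def
  proof (intro wle_add wle_sum)
    fix m assume m: "m \<in> Mset i T - {topm d i}"
    have "wt (wW n d) m < T * B"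
      using wt_Mset_lt[of m i T n d] m assms by (auto simp: topm_def T_def B_def)
    then show "wle (wW n d) (T * B - 1) (Defs.monom m :: 'a mpoly)"
      unfolding Defs.monom_def by (intro wle_mono[OF wle_single]) simp
  next
    fix k assume k: "k \<in> {i - 1..d - 1}"
    have "wle (wW n d) (0 + 0 + (k + 1 - i) * B) ((-1) ^ (d - k) * esym (Yvars n d) (d - k) * hcomp i (k + 1 - i) :: 'a mpoly)"
      unfolding B_def by (intro wle_mult wle_minus_one_pow wle_esym_wW wle_hcomp assms)
    moreover have "(k + 1 - i) * B \<le> T * B - 1"
    proof -
      have "k + 1 - i \<le> T - 1" using k assms by (auto simp: T_def)
      then have "(k + 1 - i) * B \<le> (T - 1) * B" by simp
      also have "\<dots> = T * B - B" by (simp add: diff_mult_distrib)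
      also have "\<dots> \<le> T * B - 1" using B1 by simp
      finally show ?thesis .
    qed
    ultimately show "wle (wW n d) (T * B - 1) ((-1) ^ (d - k) * esym (Yvars n d) (d - k) * hcomp i (k + 1 - i) :: 'a mpoly)"
      by (auto elim: wle_mono)
  qed
  ultimately show ?thesis unfolding wtop by blast
qed

lemma exists_red_monom:
  assumes "1 \<le> n" "n \<le> d"
  shows "\<exists>r. reduced_G n d r \<and> inI n d (Poly_Mapping.single m 1 - r :: 'a::comm_ring_1 mpoly)"
proof (induction "wt (wW n d) m" arbitrary: m rule: less_induct)
  case less
  show ?case
  proof (cases "reduced_G n d (Poly_Mapping.single m (1::'a))")
    case True then show ?thesis by (intro exI[of _ "Poly_Mapping.single m 1"]) simp
  next
    case False
    then obtain i where i: "i \<in> {1..n}" "d + 1 - i \<le> Poly_Mapping.lookup m (i - 1)"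
      by (auto simp: reduced_G_def not_less)
    define m' where "m' = Poly_Mapping.update (i - 1) (Poly_Mapping.lookup m (i - 1) - (d + 1 - i)) m"
    have m_eq: "m = m' + topm d i"
      by (rule poly_mapping_eqI) (use i in \<open>auto simp: m'_def topm_def lookup_add lookup_update lookup_single when_def\<close>)
    obtain R where R: "gpol n d i = Poly_Mapping.single (topm d i) 1 + R"
        "wle (wW n d) (wt (wW n d) (topm d i) - 1) (R :: 'a mpoly)"
      using gpol_decomp[of i n d] i assms by auto
    have "i \<le> d" using i assms by auto
    then have wtop: "1 \<le> wt (wW n d) (topm d i)" using wt_topm[of i n d] i by simp
    have "\<forall>x\<in>Poly_Mapping.keys R. \<exists>r. reduced_G n d r \<and> inI n d (Poly_Mapping.single (m' + x) 1 - r :: 'a mpoly)"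
    proof
      fix x assume x: "x \<in> Poly_Mapping.keys R"
      have "wt (wW n d) x \<le> wt (wW n d) (topm d i) - 1" using R(2) x by (auto simp: wle_def)
      then have "wt (wW n d) (m' + x) < wt (wW n d) m"
        using wtop by (simp add: m_eq wt_add)
      then show "\<exists>r. reduced_G n d r \<and> inI n d (Poly_Mapping.single (m' + x) 1 - r :: 'a mpoly)"
        by (rule less)
    qed
    then obtain f where f: "\<And>x. x \<in> Poly_Mapping.keys R \<Longrightarrow> reduced_G n d (f x) \<and> inI n d (Poly_Mapping.single (m' + x) 1 - f x :: 'a mpoly)"
      by metis
    define r where "r = - (\<Sum>x\<in>Poly_Mapping.keys R. Const (Poly_Mapping.lookup R x) * f x)"
    have "reduced_G n d r"
      unfolding r_def by (intro reduced_uminus reduced_sum reduced_Const_mult) (use f in auto)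
    moreover have "inI n d (Poly_Mapping.single m 1 - r)"
    proof -
      have sR: "Poly_Mapping.single m' 1 * R = (\<Sum>x\<in>Poly_Mapping.keys R. Const (Poly_Mapping.lookup R x) * Poly_Mapping.single (m' + x) 1)"
        by (subst pm_expand[of R]) (simp add: sum_distrib_left mult_single Const_def)
      have "Poly_Mapping.single m 1 = Poly_Mapping.single m' 1 * Poly_Mapping.single (topm d i) (1::'a)"
        by (simp add: m_eq mult_single)
      also have "\<dots> = Poly_Mapping.single m' 1 * gpol n d i - Poly_Mapping.single m' 1 * R"
        by (simp add: R(1) algebra_simps)
      finally have e1: "Poly_Mapping.single m 1 = Poly_Mapping.single m' 1 * gpol n d i -
          (\<Sum>x\<in>Poly_Mapping.keys R. Const (Poly_Mapping.lookup R x) * Poly_Mapping.single (m' + x) 1)"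
        unfolding sR .
      have "Poly_Mapping.single m 1 - r = Poly_Mapping.single m' 1 * gpol n d i -
          (\<Sum>x\<in>Poly_Mapping.keys R. Const (Poly_Mapping.lookup R x) * (Poly_Mapping.single (m' + x) 1 - f x))"
        unfolding e1 r_def right_diff_distrib sum_subtractf by (simp add: diff_diff_eq2)
      also have "inI n d \<dots>"
      proof (rule inI_diff)
        show "inI n d (Poly_Mapping.single m' 1 * gpol n d i)" using i(1) by (rule inI_gpol)
        show "inI n d (\<Sum>x\<in>Poly_Mapping.keys R. Const (Poly_Mapping.lookup R x) * (Poly_Mapping.single (m' + x) 1 - f x))"
          by (rule inI_sum, rule inI_mult) (use f in auto)
      qed
      finally show ?thesis .
    qed
    ultimately show ?thesis by blast
  qed
qed

lemma exists_red:
  assumes "1 \<le> n" "n \<le> d"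
  shows "\<exists>r. reduced_G n d r \<and> inI n d (h - r :: 'a::comm_ring_1 mpoly)"
proof -
  have "\<forall>m. \<exists>r. reduced_G n d r \<and> inI n d (Poly_Mapping.single m 1 - r :: 'a mpoly)"
    using exists_red_monom[OF assms] by blast
  then obtain f where f: "\<And>m. reduced_G n d (f m) \<and> inI n d (Poly_Mapping.single m 1 - f m :: 'a mpoly)"
    by metis
  define r where "r = (\<Sum>m\<in>Poly_Mapping.keys h. Const (Poly_Mapping.lookup h m) * f m)"
  have "reduced_G n d r" unfolding r_def by (intro reduced_sum reduced_Const_mult) (use f in auto)
  moreover have "h - r = (\<Sum>m\<in>Poly_Mapping.keys h. Const (Poly_Mapping.lookup h m) * (Poly_Mapping.single m 1 - f m))"
    by (subst (1) pm_expand[of h]) (simp add: r_def algebra_simps sum_subtractf Const_def mult_single)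
  then have "inI n d (h - r)" by (simp add: inI_sum inI_mult f)
  ultimately show ?thesis by blast
qed

lemma fr_add: "fr (a + b) = fr a + fr (b :: 'a::idom mpoly)"
  by simp
lemma fr_mult: "fr (a * b) = fr a * fr (b :: 'a::idom mpoly)"
  by simp
lemma fr_sum: "fr (sum f A) = (\<Sum>x\<in>A. fr (f x :: 'a::idom mpoly))"
proof (induction A rule: infinite_finite_induct)
  case (infinite A) then show ?case by (simp add: Zero_fract_def)
next
  case empty then show ?case by (simp add: Zero_fract_def)
next
  case (insert x F)
  have "fr (sum f (insert x F)) = fr (f x + sum f F)" using insert by simp
  also have "\<dots> = fr (f x) + fr (sum f F)" by (rule fr_add)
  finally show ?case using insert by simp
qed
lemma fr_eq_iff: "fr a = fr b \<longleftrightarrow> a = (b :: 'a::idom mpoly)"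
  by (simp add: eq_fract)
lemma fr_nz: "fr a \<noteq> 0 \<longleftrightarrow> a \<noteq> (0 :: 'a::idom mpoly)"
  by (simp add: Zero_fract_def eq_fract)

lemma wle_zero_weight[simp]: "wle (\<lambda>_. 0) 0 p"
  by (simp add: wle_def wt_def)

lemma reduced_deg:
  assumes "reduced_G n d r" "v < n"
  shows "wle (dv v) (d - v - 1) r"
  using assms unfolding reduced_G_def wle_dv
  by (auto dest!: bspec[where x="Suc v"] intro: less_imp_le_nat)

lemma vars_from_wle: "(\<And>v. v \<notin> W \<Longrightarrow> wle (dv v) 0 p) \<Longrightarrow> vars p \<subseteq> W"
  using vars_subset_iff by blast

lemma subst_evf_fix:
  assumes "vars p \<subseteq> Yvars n d"
  shows "subst (evf n a) p = p"
  by (rule subst_id_on_vars) (use assms in \<open>auto simp: evf_def\<close>)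

lemma NF_unique:
  fixes r1 r2 :: "'a::idom mpoly"
  assumes "n \<le> d" "reduced_G n d r1" "inI n d (h - r1)" "reduced_G n d r2" "inI n d (h - r2)"
  shows "r1 = r2"
proof -
  have "r1 - r2 = 0"
  proof (rule zero_lemma[OF assms(1)])
    fix v assume "v < n"
    then show "wle (dv v) (d - v - 1) (r1 - r2)"
      using reduced_deg assms by (intro wle_diff) auto
  next
    fix a assume a: "inj_on a {0..<n}" "a ` {0..<n} \<subseteq> Yvars n d"
    obtain c1 where c1: "h - r1 = (\<Sum>i\<in>{1..n}. c1 i * gpol n d i)" using assms(3) by (auto simp: inI_def)
    obtain c2 where c2: "h - r2 = (\<Sum>i\<in>{1..n}. c2 i * gpol n d i)" using assms(5) by (auto simp: inI_def)
    have "subst (evf n a) (r1 - r2) = subst (evf n a) (h - r2) - subst (evf n a) (h - r1)"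
      by (simp add: subst_diff)
    also have "subst (evf n a) (h - r2) = 0" unfolding c2 by (rule ideal_vanish[OF assms(1) a])
    also have "subst (evf n a) (h - r1) = 0" unfolding c1 by (rule ideal_vanish[OF assms(1) a])
    finally show "subst (evf n a) (r1 - r2) = 0" by simp
  qed
  then show ?thesis by simp
qed

lemma NF_props:
  fixes h :: "'a::idom mpoly"
  assumes "1 \<le> n" "n \<le> d"
  shows "reduced_G n d (normal_form_G n d h) \<and> inI n d (h - normal_form_G n d h)"
proof -
  obtain r where r: "reduced_G n d r" "inI n d (h - r)" using exists_red[OF assms] by blast
  have "normal_form_G n d h = r"
    unfolding normal_form_G_def inI_def[symmetric]
  proof (rule the_equality)
    show "reduced_G n d r \<and> inI n d (h - r)" using r by blast
    fix r' assume "reduced_G n d r' \<and> inI n d (h - r')"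
    then show "r' = r" using NF_unique[OF assms(2)] r by blast
  qed
  then show ?thesis using r by simp
qed

lemma ev_NF:
  fixes h :: "'a::idom mpoly"
  assumes "1 \<le> n" "n \<le> d" "inj_on a {0..<n}" "a ` {0..<n} \<subseteq> Yvars n d"
  shows "subst (evf n a) (normal_form_G n d h) = subst (evf n a) h"
proof -
  obtain c where c: "h - normal_form_G n d h = (\<Sum>i\<in>{1..n}. c i * gpol n d i)"
    using NF_props[OF assms(1,2), of h] by (auto simp: inI_def)
  have "subst (evf n a) (h - normal_form_G n d h) = 0"
    unfolding c by (rule ideal_vanish[OF assms(2-4)])
  then show ?thesis by (simp add: subst_diff)
qed

lemma sym_eval:
  fixes h :: "'a::comm_ring_1 mpoly"
  assumes sym: "symmetric_in {0..<n} h"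
    and a: "inj_on a {0..<n}" and b: "inj_on b {0..<n}" and ab: "a ` {0..<n} = b ` {0..<n}"
  shows "subst (evf n a) h = subst (evf n b) h"
proof -
  define \<pi> where "\<pi> v = (if v < n then inv_into {0..<n} b (a v) else v)" for v
  have inj: "inj_on \<pi> {0..<n}"
  proof (rule inj_onI)
    fix u v assume uv: "u \<in> {0..<n}" "v \<in> {0..<n}" "\<pi> u = \<pi> v"
    then have "b (inv_into {0..<n} b (a u)) = b (inv_into {0..<n} b (a v))" by (simp add: \<pi>_def)
    moreover have "a u \<in> b ` {0..<n}" "a v \<in> b ` {0..<n}" using uv ab by auto
    ultimately have "a u = a v" by (simp add: f_inv_into_f)
    then show "u = v" using a uv by (auto dest: inj_onD)
  qed
  have sub: "\<pi> ` {0..<n} \<subseteq> {0..<n}"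
  proof
    fix x assume "x \<in> \<pi> ` {0..<n}"
    then obtain u where u: "u \<in> {0..<n}" "x = \<pi> u" by blast
    then have "a u \<in> b ` {0..<n}" using ab by auto
    then have "inv_into {0..<n} b (a u) \<in> {0..<n}" by (rule inv_into_into)
    then show "x \<in> {0..<n}" using u by (simp add: \<pi>_def)
  qed
  have perm: "\<pi> permutes {0..<n}"
  proof (rule bij_imp_permutes)
    show "bij_betw \<pi> {0..<n} {0..<n}"
      unfolding bij_betw_def using inj endo_inj_surj[OF _ sub inj] by simp
    show "\<And>x. x \<notin> {0..<n} \<Longrightarrow> \<pi> x = x" by (simp add: \<pi>_def)
  qed
  have fe: "evf n a = (\<lambda>v. evf n b (\<pi> v))"
  proof
    fix v show "evf n a v = evf n b (\<pi> v)"
    proof (cases "v < n")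
      case True
      then have "a v \<in> b ` {0..<n}" using ab by auto
      moreover have "\<pi> v \<in> \<pi> ` {0..<n}" using True by auto
      then have "\<pi> v < n" using sub by auto
      ultimately show ?thesis using True by (simp add: evf_def \<pi>_def f_inv_into_f)
    qed (simp add: evf_def \<pi>_def)
  qed
  have "subst (evf n a) h = subst (evf n b) (rename \<pi> h)"
    by (simp add: fe subst_rename)
  also have "rename \<pi> h = h" using sym perm by (simp add: symmetric_in_def)
  finally show ?thesis .
qed

lemma eval_at_evf: "eval_at n Y' h = subst (evf n (\<lambda>v. sorted_list_of_set Y' ! v)) h"
  unfolding eval_at_def evf_def by (rule refl)

lemma sorted_nth_props:
  assumes "finite Y'" "card Y' = n"
  shows "inj_on (\<lambda>v. sorted_list_of_set Y' ! v) {0..<n}" "(\<lambda>v. sorted_list_of_set Y' ! v) ` {0..<n} = Y'"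
proof -
  have l: "length (sorted_list_of_set Y') = n" using assms by simp
  show "inj_on (\<lambda>v. sorted_list_of_set Y' ! v) {0..<n}"
    using inj_on_nth[of "sorted_list_of_set Y'" "{0..<n}"] l by simp
  have s: "set (sorted_list_of_set Y') = Y'" using assms by simp
  show "(\<lambda>v. sorted_list_of_set Y' ! v) ` {0..<n} = Y'"
  proof (intro equalityI subsetI)
    fix x assume "x \<in> (\<lambda>v. sorted_list_of_set Y' ! v) ` {0..<n}"
    then obtain v where "v < n" "x = sorted_list_of_set Y' ! v" by auto
    then show "x \<in> Y'" using nth_mem[of v "sorted_list_of_set Y'"] l s by simp
  next
    fix x assume "x \<in> Y'"
    then have "x \<in> set (sorted_list_of_set Y')" using s by simp
    then obtain v where "v < n" "sorted_list_of_set Y' ! v = x" using l by (auto simp: in_set_conv_nth)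
    then show "x \<in> (\<lambda>v. sorted_list_of_set Y' ! v) ` {0..<n}" by force
  qed
qed

lemma wle_prod0: "(\<And>i. i \<in> I \<Longrightarrow> wle w 0 (f i)) \<Longrightarrow> wle w 0 (prod f I)"
  using wle_prod[of I w "\<lambda>_. 0" f] by simp

lemma rename_Var[simp]: "rename \<pi> (Var u) = Var (\<pi> u)"
  by (simp add: rename_def)

lemma field_aux: "(c::'b::field) \<noteq> 0 \<Longrightarrow> (c * z) * (a * b / c) = a * b * z"
  by (simp add: field_simps)

lemma interp_core:
  fixes h :: "'a::idom mpoly"
  assumes n1: "1 \<le> n" and nd: "n \<le> d" and hv: "vars h \<subseteq> {0..<n}" and hs: "symmetric_in {0..<n} h"
  shows "\<exists>P D. P = D * normal_form_G n d h \<and> D \<noteq> 0 \<and> (\<forall>v. v \<notin> Yvars n d \<longrightarrow> wle (dv v) 0 D)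
     \<and> (\<forall>v<n. wle (dv v) (d - n) P) \<and> (\<forall>v. v \<notin> Xvars n \<union> Yvars n d \<longrightarrow> wle (dv v) 0 P)
     \<and> lagrange_rY n d h = fr (normal_form_G n d h)"
proof -
  define Sets where "Sets = {Y'. Y' \<subseteq> Yvars n d \<and> card Y' = n}"
  define E where "E = (\<lambda>Y'. eval_at n Y' h)"
  define N where "N = (\<lambda>Y'. (\<Prod>x\<in>Xvars n. \<Prod>y'\<in>Yvars n d - Y'. Var x - Var y' :: 'a mpoly))"
  define Den where "Den = (\<lambda>Y'. (\<Prod>y\<in>Y'. \<Prod>y'\<in>Yvars n d - Y'. Var y - Var y' :: 'a mpoly))"
  define D where "D = (\<Prod>Y'\<in>Sets. Den Y')"
  define Dc where "Dc = (\<lambda>Y'. (\<Prod>Y''\<in>Sets - {Y'}. Den Y''))"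
  define P where "P = (\<Sum>Y'\<in>Sets. E Y' * N Y' * Dc Y')"
  define NF where "NF = normal_form_G n d h"
  have finS: "finite Sets" unfolding Sets_def by (rule finite_subset[of _ "Pow (Yvars n d)"]) auto
  have finY: "finite Y'" if "Y' \<in> Sets" for Y' using that unfolding Sets_def by (auto intro: finite_subset)
  have Den_nz: "Den Y' \<noteq> 0" if "Y' \<in> Sets" for Y'
    unfolding Den_def using finY[OF that]
    by (auto simp: prod_zero_iff dest: Var_inj)
  have D_nz: "D \<noteq> 0" unfolding D_def using finS Den_nz by (auto simp: prod_zero_iff)
  have D_split: "D = Den Y' * Dc Y'" if "Y' \<in> Sets" for Y'
    unfolding D_def Dc_def using finS that by (rule prod.remove)
  have wDen: "wle (dv v) 0 (Den Y')" if "Y' \<in> Sets" "v \<notin> Yvars n d" for Y' v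
    unfolding Den_def
  proof (intro wle_prod0)
    fix y y' assume "y \<in> Y'" "y' \<in> Yvars n d - Y'"
    then have "y \<noteq> v" "y' \<noteq> v" using that by (auto simp: Sets_def)
    then show "wle (dv v) 0 (Var y - Var y' :: 'a mpoly)" by (intro wle_diff wle_Var_dv0)
  qed
  have wD: "wle (dv v) 0 D" if "v \<notin> Yvars n d" for v
    unfolding D_def using wDen that by (intro wle_prod0) auto
  have wDc: "wle (dv v) 0 (Dc Y')" if "v \<notin> Yvars n d" for v Y'
    unfolding Dc_def using wDen that by (intro wle_prod0) auto
  have wE: "wle (dv v) 0 (E Y')" if "Y' \<in> Sets" "v \<notin> Yvars n d" for Y' v
  proof -
    let ?s = "\<lambda>u. sorted_list_of_set Y' ! u"
    have img: "?s ` {0..<n} = Y'" using sorted_nth_props[of Y' n] finY[OF that(1)] that(1) by (auto simp: Sets_def)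
    show ?thesis unfolding E_def eval_at_evf
    proof (rule wle_subst[where e="\<lambda>_. 0"])
      show "wle (\<lambda>_. 0) 0 h" by simp
      fix w assume "w \<in> vars h"
      then have "w < n" using hv by auto
      then have "?s w \<in> Y'" using img by auto
      then have "?s w \<noteq> v" using that by (auto simp: Sets_def)
      then show "wle (dv v) 0 (evf n ?s w)" using \<open>w < n\<close> by (simp add: evf_def wle_Var_dv0)
    qed
  qed
  have wN0: "wle (dv v) 0 (N Y')" if "v \<notin> Xvars n \<union> Yvars n d" for v Y'
    unfolding N_def
  proof (intro wle_prod0)
    fix x y' assume "x \<in> Xvars n" "y' \<in> Yvars n d - Y'"
    then have "x \<noteq> v" "y' \<noteq> v" using that by auto
    then show "wle (dv v) 0 (Var x - Var y' :: 'a mpoly)" by (intro wle_diff wle_Var_dv0)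
  qed
  have wN: "wle (dv v) (d - n) (N Y')" if "v < n" "Y' \<in> Sets" for v Y'
  proof -
    have "wle (dv v) (\<Sum>x\<in>Xvars n. \<Sum>y'\<in>Yvars n d - Y'. (if x = v then 1 else 0)) (N Y')"
      unfolding N_def
    proof (intro wle_prod)
      fix x y' assume "x \<in> Xvars n" "y' \<in> Yvars n d - Y'"
      then have "y' \<noteq> v" using that by auto
      then show "wle (dv v) (if x = v then 1 else 0) (Var x - Var y' :: 'a mpoly)"
        using wle_Var_dv[of v x] wle_Var_dv0[of y' v]
        by (intro wle_diff) (auto elim: wle_mono)
    qed
    moreover have "(\<Sum>x\<in>Xvars n. \<Sum>y'\<in>Yvars n d - Y'. (if x = v then 1 else 0 :: nat)) = card (Yvars n d - Y')"
    proof -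
      have "(\<Sum>x\<in>Xvars n. \<Sum>y'\<in>Yvars n d - Y'. (if x = v then 1 else 0 :: nat))
          = (\<Sum>x\<in>Xvars n. card (Yvars n d - Y') * (if x = v then 1 else 0))"
        by simp
      also have "\<dots> = card (Yvars n d - Y') * (\<Sum>x\<in>Xvars n. (if x = v then 1 else 0))"
        by (rule sum_distrib_left[symmetric])
      also have "(\<Sum>x\<in>Xvars n. (if x = v then 1 else 0 :: nat)) = 1" using that(1) by (simp add: sum.delta)
      finally show ?thesis by simp
    qed
    moreover have "card (Yvars n d - Y') = d - n"
    proof -
      have "Y' \<subseteq> Yvars n d" "card Y' = n" using that(2) by (auto simp: Sets_def)
      moreover have "finite Y'" using finY[OF that(2)] .
      ultimately show ?thesis by (simp add: card_Diff_subset)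
    qed
    ultimately show ?thesis by simp
  qed
  have wP: "wle (dv v) (d - n) P" if "v < n" for v
    unfolding P_def
  proof (intro wle_sum)
    fix Y' assume Y': "Y' \<in> Sets"
    have "v \<notin> Yvars n d" using that by auto
    then have "wle (dv v) (0 + (d - n) + 0) (E Y' * N Y' * Dc Y')"
      using wE[OF Y'] wN[OF that Y'] wDc by (intro wle_mult) auto
    then show "wle (dv v) (d - n) (E Y' * N Y' * Dc Y')" by simp
  qed
  have wP0: "wle (dv v) 0 P" if "v \<notin> Xvars n \<union> Yvars n d" for v
    unfolding P_def
  proof (intro wle_sum)
    fix Y' assume Y': "Y' \<in> Sets"
    have "wle (dv v) (0 + 0 + 0) (E Y' * N Y' * Dc Y')"
      using wE[OF Y'] wN0[OF that] wDc that by (intro wle_mult) auto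
    then show "wle (dv v) 0 (E Y' * N Y' * Dc Y')" by simp
  qed
  have ev: "subst (evf n a) (P - D * NF) = 0" if a: "inj_on a {0..<n}" "a ` {0..<n} \<subseteq> Yvars n d" for a
  proof -
    define A where "A = a ` {0..<n}"
    have A: "A \<in> Sets" using a by (simp add: A_def Sets_def card_image)
    have fixY: "subst (evf n a) p = p" if "\<And>v. v \<notin> Yvars n d \<Longrightarrow> wle (dv v) 0 p" for p
      by (rule subst_evf_fix, rule vars_from_wle) (use that in auto)
    have evN: "subst (evf n a) (N Y') = (\<Prod>x\<in>Xvars n. \<Prod>y'\<in>Yvars n d - Y'. Var (a x) - Var y')" for Y'
      unfolding N_def by (simp add: subst_prod subst_diff evf_def)
    have evN0: "subst (evf n a) (N Y') = 0" if "Y' \<in> Sets" "Y' \<noteq> A" for Y'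
    proof -
      have "\<not> A \<subseteq> Y'"
      proof
        assume "A \<subseteq> Y'"
        moreover have "card A = card Y'" using A that(1) by (simp add: Sets_def)
        ultimately have "A = Y'" using card_subset_eq[OF finY[OF that(1)]] by blast
        then show False using that(2) by simp
      qed
      then obtain x where x: "x \<in> Xvars n" "a x \<notin> Y'" unfolding A_def by blast
      have "a x \<in> a ` {0..<n}" using x by auto
      then have "a x \<in> Yvars n d" using a(2) by blast
      then have "a x \<in> Yvars n d - Y'" using x by auto
      then have "(\<Prod>y'\<in>Yvars n d - Y'. Var (a x) - Var y' :: 'a mpoly) = 0"
        by (intro prod_zero) auto
      then show ?thesis unfolding evN using x by (intro prod_zero) auto
    qed
    have evNA: "subst (evf n a) (N A) = Den A"
    proof -
      have "subst (evf n a) (N A) = (\<Prod>x\<in>Xvars n. (\<lambda>y. \<Prod>y'\<in>Yvars n d - A. Var y - Var y' :: 'a mpoly) (a x))"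
        by (simp add: evN)
      also have "\<dots> = (\<Prod>y\<in>A. \<Prod>y'\<in>Yvars n d - A. Var y - Var y')"
        unfolding A_def using prod.reindex[OF a(1), of "\<lambda>y. \<Prod>y'\<in>Yvars n d - a ` {0..<n}. Var y - Var y' :: 'a mpoly"]
        by (simp add: comp_def)
      finally show ?thesis by (simp add: Den_def)
    qed
    have evE: "subst (evf n a) (E Y') = E Y'" if "Y' \<in> Sets" for Y'
      by (rule fixY, rule wE[OF that])
    have evDc: "subst (evf n a) (Dc Y') = Dc Y'" for Y'
      by (rule fixY, rule wDc)
    have evD: "subst (evf n a) D = D"
      by (rule fixY, rule wD)
    have "subst (evf n a) P = (\<Sum>Y'\<in>Sets. E Y' * subst (evf n a) (N Y') * Dc Y')"
      unfolding P_def subst_sum subst_mult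
      by (intro sum.cong refl) (simp add: evE evDc)
    also have "\<dots> = E A * subst (evf n a) (N A) * Dc A"
      by (subst sum.remove[OF finS A]) (auto simp: evN0 intro!: sum.neutral)
    also have "\<dots> = E A * D" using D_split[OF A] by (simp add: evNA mult_ac)
    also have "E A = subst (evf n a) h"
    proof -
      let ?s = "\<lambda>u. sorted_list_of_set A ! u"
      have "inj_on ?s {0..<n}" "?s ` {0..<n} = A"
        using sorted_nth_props[of A n] finY[OF A] A by (auto simp: Sets_def)
      then have "subst (evf n ?s) h = subst (evf n a) h"
        using sym_eval[OF hs _ a(1)] by (simp add: A_def)
      then show ?thesis by (simp add: E_def eval_at_evf)
    qed
    finally have 1: "subst (evf n a) P = subst (evf n a) h * D" .
    have "subst (evf n a) (D * NF) = D * subst (evf n a) h"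
      by (simp add: subst_mult evD NF_def ev_NF[OF n1 nd a])
    then show ?thesis using 1 by (simp add: subst_diff mult.commute)
  qed
  have red: "reduced_G n d NF" using NF_props[OF n1 nd, of h] by (simp add: NF_def)
  have PD: "P = D * NF"
  proof -
    have "P - D * NF = 0"
    proof (rule zero_lemma[OF nd])
      fix v assume v: "v < n"
      have "wle (dv v) (d - v - 1) P" using wP[OF v] v by (auto elim: wle_mono)
      moreover have "wle (dv v) (0 + (d - v - 1)) (D * NF)"
        using wD[of v] reduced_deg[OF red v] v by (intro wle_mult) auto
      ultimately show "wle (dv v) (d - v - 1) (P - D * NF)" by (intro wle_diff) auto
    qed (rule ev)
    then show ?thesis by simp
  qed
  have lag: "lagrange_rY n d h = (\<Sum>Y'\<in>Sets. fr (E Y') * fr (N Y') / fr (Den Y'))"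
    unfolding lagrange_rY_def Sets_def E_def N_def Den_def by (rule refl)
  have "fr D * lagrange_rY n d h = fr D * fr NF"
  proof -
    have "fr D * lagrange_rY n d h = (\<Sum>Y'\<in>Sets. fr (E Y') * fr (N Y') * fr (Dc Y'))"
      unfolding lag sum_distrib_left
    proof (intro sum.cong refl)
      fix Y' assume Y': "Y' \<in> Sets"
      have nz: "fr (Den Y') \<noteq> 0" using Den_nz[OF Y'] by (simp add: fr_nz)
      have fD: "fr D = fr (Den Y') * fr (Dc Y')" by (simp only: D_split[OF Y'] fr_mult)
      show "fr D * (fr (E Y') * fr (N Y') / fr (Den Y')) = fr (E Y') * fr (N Y') * fr (Dc Y')"
        unfolding fD by (rule field_aux[OF nz])
    qed
    also have "\<dots> = fr P" unfolding P_def fr_sum by simp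
    also have "\<dots> = fr D * fr NF" using PD by simp
    finally show ?thesis .
  qed
  moreover have nzD: "fr D \<noteq> 0" using D_nz fr_nz by blast
  ultimately have "lagrange_rY n d h = fr NF" using mult_left_cancel[OF nzD] by blast
  then show ?thesis using PD D_nz wD wP wP0 unfolding NF_def by blast
qed

theorem corollary2p4:
  fixes n d :: nat and h :: "'a::idom mpoly"
  assumes "1 \<le> n" and "n \<le> d"
    and "vars h \<subseteq> Xvars n"
    and "symmetric_in (Xvars n) h"
  shows "vars (normal_form_G n d h) \<subseteq> Xvars n \<union> Yvars n d
    \<and> symmetric_in (Xvars n) (normal_form_G n d h)
    \<and> (\<forall>m\<in>Poly_Mapping.keys (normal_form_G n d h). \<forall>i\<in>Xvars n. Poly_Mapping.lookup m i \<le> d - n)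
    \<and> symmetric_in (Yvars n d) (normal_form_G n d h)
    \<and> lagrange_rY n d h = fr (normal_form_G n d h)"
proof -
  note n1 = assms(1) and nd = assms(2) and hv = assms(3) and hs = assms(4)
  define NF where "NF = normal_form_G n d h"
  obtain P D where PD: "P = D * NF" "D \<noteq> 0" "\<And>v. v \<notin> Yvars n d \<Longrightarrow> wle (dv v) 0 D"
      "\<And>v. v < n \<Longrightarrow> wle (dv v) (d - n) P" "\<And>v. v \<notin> Xvars n \<union> Yvars n d \<Longrightarrow> wle (dv v) 0 P"
      and lag: "lagrange_rY n d h = fr NF"
    using interp_core[OF n1 nd hv hs] unfolding NF_def by blast
  have degNF: "wle (dv v) (d - n) NF" if "v < n" for v
    using split_deg[OF PD(3) PD(2)] PD(1,4) that by auto
  have varsNF: "vars NF \<subseteq> Xvars n \<union> Yvars n d"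
  proof (rule vars_from_wle)
    fix v assume "v \<notin> Xvars n \<union> Yvars n d"
    then show "wle (dv v) 0 NF" using split_deg[OF PD(3) PD(2)] PD(1,5) by auto
  qed
  have red: "reduced_G n d NF" using NF_props[OF n1 nd, of h] by (simp add: NF_def)
  have evNF: "subst (evf n a) NF = subst (evf n a) h" if "inj_on a {0..<n}" "a ` {0..<n} \<subseteq> Yvars n d" for a
    unfolding NF_def by (rule ev_NF[OF n1 nd that])
  have symX: "symmetric_in (Xvars n) NF"
    unfolding symmetric_in_def
  proof (intro allI impI)
    fix \<pi> assume \<pi>: "\<pi> permutes Xvars n"
    have "rename \<pi> NF - NF = 0"
    proof (rule zero_lemma[OF nd])
      fix v assume v: "v < n"
      have iv: "inv \<pi> v < n" using permutes_in_image[OF permutes_inv[OF \<pi>], of v] v by simp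
      have "wle (dv v) (d - n) (rename \<pi> NF)"
        unfolding rename_def
      proof (rule wle_subst[where e="dv (inv \<pi> v)"])
        show "wle (dv (inv \<pi> v)) (d - n) NF" using degNF[OF iv] .
        fix w
        have "\<pi> w = v \<longleftrightarrow> w = inv \<pi> v" using permutes_inv_eq[OF \<pi>, of v w] by auto
        then show "wle (dv v) (dv (inv \<pi> v) w) (Var (\<pi> w))"
          using wle_Var_dv[of v "\<pi> w"] by (simp add: dv_def)
      qed
      then have "wle (dv v) (d - v - 1) (rename \<pi> NF)" using v by (auto elim: wle_mono)
      then show "wle (dv v) (d - v - 1) (rename \<pi> NF - NF)"
        using reduced_deg[OF red v] by (intro wle_diff)
    next
      fix a assume a: "inj_on a {0..<n}" "a ` {0..<n} \<subseteq> Yvars n d"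
      have img: "\<pi> ` {0..<n} = {0..<n}" by (rule permutes_image[OF \<pi>])
      have injc: "inj_on (a \<circ> \<pi>) {0..<n}"
        using comp_inj_on[OF permutes_inj_on[OF \<pi>], of a "{0..<n}"] a(1) img by simp
      have imc: "(a \<circ> \<pi>) ` {0..<n} = a ` {0..<n}" unfolding image_comp[symmetric] img ..
      have fe: "(\<lambda>w. evf n a (\<pi> w)) = evf n (a \<circ> \<pi>)"
      proof
        fix w show "evf n a (\<pi> w) = evf n (a \<circ> \<pi>) w"
        proof (cases "w < n")
          case True
          then have "\<pi> w < n" using permutes_in_image[OF \<pi>, of w] by simp
          then show ?thesis using True by (simp add: evf_def)
        next
          case False
          then have "\<pi> w = w" using permutes_not_in[OF \<pi>, of w] by simp
          then show ?thesis using False by (simp add: evf_def)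
        qed
      qed
      have "subst (evf n a) (rename \<pi> NF) = subst (evf n (a \<circ> \<pi>)) NF"
        by (simp add: subst_rename fe)
      also have "\<dots> = subst (evf n (a \<circ> \<pi>)) h" using evNF[OF injc] imc a(2) by simp
      also have "\<dots> = subst (evf n a) h" by (rule sym_eval[OF hs injc a(1) imc])
      also have "\<dots> = subst (evf n a) NF" using evNF[OF a] by simp
      finally show "subst (evf n a) (rename \<pi> NF - NF) = 0" by (simp add: subst_diff)
    qed
    then show "rename \<pi> NF = NF" by simp
  qed
  have symY: "symmetric_in (Yvars n d) NF"
    unfolding symmetric_in_def
  proof (intro allI impI)
    fix \<sigma> assume \<sigma>: "\<sigma> permutes Yvars n d"
    have \<sigma>X: "\<sigma> w = w" if "w < n" for w using permutes_not_in[OF \<sigma>, of w] that by simp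
    have \<sigma>ge: "n \<le> \<sigma> w" if "n \<le> w" for w
    proof (cases "w \<in> Yvars n d")
      case True then have "\<sigma> w \<in> Yvars n d" using permutes_in_image[OF \<sigma>] by simp
      then show ?thesis by simp
    next
      case False then show ?thesis using permutes_not_in[OF \<sigma>, of w] that by simp
    qed
    have "rename \<sigma> NF - NF = 0"
    proof (rule zero_lemma[OF nd])
      fix v assume v: "v < n"
      have "wle (dv v) (d - n) (rename \<sigma> NF)"
        unfolding rename_def
      proof (rule wle_subst[where e="dv v"])
        show "wle (dv v) (d - n) NF" using degNF[OF v] .
        fix w
        have "\<sigma> w = v \<longleftrightarrow> w = v"
        proof
          assume "\<sigma> w = v"
          show "w = v"
          proof (rule ccontr)
            assume "w \<noteq> v"
            then have "w \<notin> Yvars n d \<Longrightarrow> False" using permutes_not_in[OF \<sigma>, of w] \<open>\<sigma> w = v\<close> by simp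
            then have "w \<in> Yvars n d" by blast
            then have "\<sigma> w \<in> Yvars n d" using permutes_in_image[OF \<sigma>] by simp
            then show False using \<open>\<sigma> w = v\<close> v by simp
          qed
        qed (use \<sigma>X v in simp)
        then show "wle (dv v) (dv v w) (Var (\<sigma> w))"
          using wle_Var_dv[of v "\<sigma> w"] by (simp add: dv_def)
      qed
      then have "wle (dv v) (d - v - 1) (rename \<sigma> NF)" using v by (auto elim: wle_mono)
      then show "wle (dv v) (d - v - 1) (rename \<sigma> NF - NF)"
        using reduced_deg[OF red v] by (intro wle_diff)
    next
      fix a assume a: "inj_on a {0..<n}" "a ` {0..<n} \<subseteq> Yvars n d"
      define b where "b = inv \<sigma> \<circ> a"
      have isg: "inv \<sigma> permutes Yvars n d" by (rule permutes_inv[OF \<sigma>])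
      have injb: "inj_on b {0..<n}" unfolding b_def
        by (rule comp_inj_on[OF a(1)]) (rule permutes_inj_on[OF isg])
      have imb: "b ` {0..<n} \<subseteq> Yvars n d"
      proof
        fix y assume "y \<in> b ` {0..<n}"
        then obtain u where u: "u < n" "y = inv \<sigma> (a u)" by (auto simp: b_def)
        have "a u \<in> a ` {0..<n}" using u by auto
        then have "a u \<in> Yvars n d" using a(2) by blast
        then show "y \<in> Yvars n d" using u permutes_in_image[OF isg, of "a u"] by simp
      qed
      have fe: "(\<lambda>w. evf n a (\<sigma> w)) = (\<lambda>w. rename \<sigma> (evf n b w))"
      proof
        fix w show "evf n a (\<sigma> w) = rename \<sigma> (evf n b w)"
        proof (cases "w < n")
          case True then show ?thesis
            by (simp add: evf_def \<sigma>X b_def permutes_inverses[OF \<sigma>])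
        next
          case False then show ?thesis using \<sigma>ge[of w] by (simp add: evf_def)
        qed
      qed
      have "subst (evf n a) (rename \<sigma> NF) = subst (\<lambda>w. rename \<sigma> (evf n b w)) NF"
        by (simp add: subst_rename fe)
      also have "\<dots> = rename \<sigma> (subst (evf n b) NF)" by (simp add: rename_subst)
      also have "\<dots> = rename \<sigma> (subst (evf n b) h)" using evNF[OF injb imb] by simp
      also have "\<dots> = subst (\<lambda>w. rename \<sigma> (evf n b w)) h" by (simp add: rename_subst)
      also have "\<dots> = subst (evf n a) h"
      proof (rule subst_cong)
        fix w assume "w \<in> vars h"
        then have "w < n" using hv by auto
        then show "rename \<sigma> (evf n b w) = evf n a w"
          by (simp add: evf_def b_def permutes_inverses[OF \<sigma>])
      qed
      also have "\<dots> = subst (evf n a) NF" using evNF[OF a] by simp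
      finally show "subst (evf n a) (rename \<sigma> NF - NF) = 0" by (simp add: subst_diff)
    qed
    then show "rename \<sigma> NF = NF" by simp
  qed
  have degs: "\<forall>m\<in>Poly_Mapping.keys NF. \<forall>i\<in>Xvars n. Poly_Mapping.lookup m i \<le> d - n"
    using degNF by (auto simp: wle_dv)
  show ?thesis using varsNF symX degs symY lag unfolding NF_def by blast
qed

end
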